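(* Let $$\Gamma=\left\langle\mathbb{Z}^3,\left(0,\begin{pmatrix}1&-1&0\\0&-1&0\\0&0&-1\end{pmatrix}\right)\right\rangle\subseteq\mathrm{Aff}(\mathbb{R}^3).$$ Then $\mathrm{Spec}_R(\Gamma)=4\mathbb{N}\cup\{\infty\}$.
   Context: $\mathrm{Aff}(\mathbb{R}^3)=\mathbb{R}^3\rtimes\mathrm{GL}_3(\mathbb{R})$ with multiplication $(d_1,D_1)(d_2,D_2)=(d_1+D_1d_2,D_1D_2)$; $\mathbb{Z}^3$ denotes $\{(z,I_3)\mid z\in\mathbb{Z}^3\}$. $\mathbb{N}=\{1,2,3,\dots\}$, $4\mathbb{N}=\{4,8,12,\dots\}$. For an automorphism $\varphi$ of a group $G$, $R(\varphi)\in\mathbb{N}\cup\{\infty\}$ is the number of classes of the relation $g\sim g'\iff\exists h\in G: g=hg'\varphi(h)^{-1}$, and $\mathrm{Spec}_R(G)=\{R(\varphi)\mid\varphi\in\mathrm{Aut}(G)\}$. *)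

theory Defs
  imports "HOL-Analysis.Analysis" "HOL-Algebra.Generated_Groups" "HOL-Library.Extended_Nat"
begin

definition aff_mult :: "((real^3) \<times> (real^3^3)) \<Rightarrow> ((real^3) \<times> (real^3^3)) \<Rightarrow> ((real^3) \<times> (real^3^3))" where
  "aff_mult p q = (fst p + (snd p *v fst q), snd p ** snd q)"

definition Aff3 :: "((real^3) \<times> (real^3^3)) monoid" where
  "Aff3 = \<lparr> carrier = {p. invertible (snd p)}, mult = aff_mult, one = (0, mat 1) \<rparr>"

definition Z3 :: "((real^3) \<times> (real^3^3)) set" where
  "Z3 = {((\<chi> i. of_int (z i)), mat 1) | z :: 3 \<Rightarrow> int. True}"

definition A_mat :: "real^3^3" where
  "A_mat = vector [vector [1, -1, 0], vector [0, -1, 0], vector [0, 0, -1]]"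

definition Gamma :: "((real^3) \<times> (real^3^3)) monoid" where
  "Gamma = Aff3\<lparr> carrier := generate Aff3 (Z3 \<union> {(0, A_mat)}) \<rparr>"

definition reid_rel :: "('a, 'b) monoid_scheme \<Rightarrow> ('a \<Rightarrow> 'a) \<Rightarrow> ('a \<times> 'a) set" where
  "reid_rel G \<phi> = {(g, g'). g \<in> carrier G \<and> g' \<in> carrier G \<and>
     (\<exists>h \<in> carrier G. g = h \<otimes>\<^bsub>G\<^esub> g' \<otimes>\<^bsub>G\<^esub> inv\<^bsub>G\<^esub> (\<phi> h))}"

definition reidemeister_number :: "('a, 'b) monoid_scheme \<Rightarrow> ('a \<Rightarrow> 'a) \<Rightarrow> enat" where
  "reidemeister_number G \<phi> =
     (if finite (carrier G // reid_rel G \<phi>) then enat (card (carrier G // reid_rel G \<phi>)) else \<infinity>)"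

definition reidemeister_spectrum :: "('a, 'b) monoid_scheme \<Rightarrow> enat set" where
  "reidemeister_spectrum G = {reidemeister_number G \<phi> | \<phi>. \<phi> \<in> iso G G}"

end

theory Submission
  imports Defs
begin


lemma quot_card_inv:
  assumes r: "r \<subseteq> A \<times> A" and inv: "\<And>a b. a \<in> A \<Longrightarrow> b \<in> A \<Longrightarrow> (a,b) \<in> r \<longleftrightarrow> \<omega> a = \<omega> b"
  shows "card (A // r) = card (\<omega> ` A) \<and> (finite (A // r) \<longleftrightarrow> finite (\<omega> ` A))"
proof -
  define P where "P = (\<lambda>y. {b\<in>A. \<omega> b = y})"
  have cls: "r `` {a} = P (\<omega> a)" if "a \<in> A" for a
    using r inv[OF that] unfolding P_def by auto
  have eq: "A // r = P ` (\<omega> ` A)"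
    unfolding quotient_def using cls by (auto simp: image_iff)
  have inj: "inj_on P (\<omega> ` A)"
    unfolding inj_on_def P_def by blast
  show ?thesis using eq inj card_image finite_image_iff by metis
qed

lemma orb0: "s (s y) = y \<Longrightarrow> z \<in> {y, s y} \<Longrightarrow> {y, s y} = {z, s z}"
  by auto

lemma orbit_count:
  assumes fin: "finite Y" and cl: "\<And>y. y \<in> Y \<Longrightarrow> s y \<in> Y" and inv: "\<And>y. y \<in> Y \<Longrightarrow> s (s y) = y"
  shows "2 * card ((\<lambda>y. {y, s y}) ` Y) = card Y + card {y\<in>Y. s y = y}"
proof -
  define Orb where "Orb = (\<lambda>y. {y, s y}) ` Y"
  define O1 where "O1 = (\<lambda>y. {y, s y}) ` {y\<in>Y. s y = y}"
  define O2 where "O2 = (\<lambda>y. {y, s y}) ` {y\<in>Y. s y \<noteq> y}"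
  have OU: "Orb = O1 \<union> O2" unfolding Orb_def O1_def O2_def by auto
  have disjO: "O1 \<inter> O2 = {}" unfolding O1_def O2_def
  proof (rule equalityI, rule subsetI)
    fix x assume "x \<in> (\<lambda>y. {y, s y}) ` {y\<in>Y. s y = y} \<inter> (\<lambda>y. {y, s y}) ` {y\<in>Y. s y \<noteq> y}"
    then obtain y1 y2 where "y1 \<in> Y" "s y1 = y1" "y2 \<in> Y" "s y2 \<noteq> y2" "{y1, s y1} = {y2, s y2}" by auto
    thus "x \<in> {}" by (metis doubleton_eq_iff)
  qed simp
  have finO: "finite O1" "finite O2" using fin unfolding O1_def O2_def by auto
  have c1: "card O1 = card {y\<in>Y. s y = y}"
  proof -
    have "O1 = (\<lambda>y. {y}) ` {y\<in>Y. s y = y}" unfolding O1_def by auto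
    moreover have "inj_on (\<lambda>y. {y}) {y\<in>Y. s y = y}" by (auto simp: inj_on_def)
    ultimately show ?thesis by (simp add: card_image)
  qed
  have orb: "{y, s y} = {z, s z}" if hy: "y \<in> Y" "z \<in> {y, s y}" for y z
    by (rule orb0[OF inv[OF hy(1)] hy(2)])
  have U2: "\<Union>O2 = {y\<in>Y. s y \<noteq> y}"
  proof
    show "\<Union>O2 \<subseteq> {y\<in>Y. s y \<noteq> y}"
    proof
      fix x assume "x \<in> \<Union>O2"
      then obtain y where y: "y \<in> Y" "s y \<noteq> y" "x \<in> {y, s y}" unfolding O2_def by auto
      thus "x \<in> {y\<in>Y. s y \<noteq> y}" using cl inv[OF y(1)] by auto
    qed
    show "{y\<in>Y. s y \<noteq> y} \<subseteq> \<Union>O2" unfolding O2_def by blast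
  qed
  have part: "c1 \<inter> c2 = {}" if hc: "c1 \<in> O2" "c2 \<in> O2" "c1 \<noteq> c2" for c1 c2
  proof (rule ccontr)
    assume "c1 \<inter> c2 \<noteq> {}"
    then obtain z where z: "z \<in> c1" "z \<in> c2" by blast
    obtain y1 y2 where yy: "y1 \<in> Y" "c1 = {y1, s y1}" "y2 \<in> Y" "c2 = {y2, s y2}"
      using hc(1,2) unfolding O2_def by auto
    have "c1 = {z, s z}" using orb[of y1 z] yy z by simp
    moreover have "c2 = {z, s z}" using orb[of y2 z] yy z by simp
    ultimately
    show False using hc(3) by simp
  qed
  have "2 * card O2 = card (\<Union>O2)"
    apply (rule card_partition)
    subgoal by fact
    subgoal using U2 fin by simp
    subgoal unfolding O2_def by auto
    subgoal using part by blast
    done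
  hence c2: "2 * card O2 = card {y\<in>Y. s y \<noteq> y}" using U2 by simp
  have "card Y = card {y\<in>Y. s y = y} + card {y\<in>Y. s y \<noteq> y}"
  proof -
    have "Y = {y\<in>Y. s y = y} \<union> {y\<in>Y. s y \<noteq> y}" by auto
    moreover have "card ({y\<in>Y. s y = y} \<union> {y\<in>Y. s y \<noteq> y}) = card {y\<in>Y. s y = y} + card {y\<in>Y. s y \<noteq> y}"
      by (rule card_Un_disjoint) (use fin in auto)
    ultimately show ?thesis by simp
  qed
  moreover have "card Orb = card O1 + card O2" unfolding OU by (rule card_Un_disjoint[OF finO disjO])
  ultimately show ?thesis using c1 c2 unfolding Orb_def by simp
qed

lemma quot_infinite_inv:
  assumes refl: "\<And>a. a \<in> A \<Longrightarrow> (a,a) \<in> r"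
    and inv: "\<And>a b. (a,b) \<in> r \<Longrightarrow> \<omega> a = \<omega> b"
    and inf: "infinite (\<omega> ` A)"
  shows "infinite (A // r)"
proof
  assume f: "finite (A // r)"
  have "\<omega> ` A \<subseteq> (\<lambda>C. the_elem (\<omega> ` C)) ` (A // r)"
  proof
    fix y assume "y \<in> \<omega> ` A"
    then obtain a where a: "a \<in> A" "y = \<omega> a" by auto
    have "\<omega> ` (r``{a}) = {\<omega> a}"
    proof (intro equalityI subsetI)
      fix x assume "x \<in> \<omega> ` (r``{a})"
      then obtain b where "(a,b) \<in> r" "x = \<omega> b" by auto
      thus "x \<in> {\<omega> a}" using inv[of a b] by simp
    next
      fix x assume "x \<in> {\<omega> a}" thus "x \<in> \<omega> ` (r``{a})" using refl[OF a(1)] by auto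
    qed
    hence "the_elem (\<omega> ` (r``{a})) = y" using a by simp
    moreover have "r``{a} \<in> A // r" using a(1) by (rule quotientI)
    ultimately show "y \<in> (\<lambda>C. the_elem (\<omega> ` C)) ` (A // r)" by (metis image_eqI)
  qed
  thus False using inf finite_subset[OF _ finite_imageI[OF f]] by blast
qed

lemma (in group) reid_equiv0:
  assumes h: "\<phi> \<in> hom G G"
  shows "equiv (carrier G) (reid_rel G \<phi>)"
proof -
  interpret gh: group_hom G G \<phi> using h by (simp add: group_hom_def group_hom_axioms_def group_axioms)
  show ?thesis
  proof (rule equivI)
    show "refl_on (carrier G) (reid_rel G \<phi>)"
      unfolding refl_on_def reid_rel_def
      by (auto intro!: bexI[of _ \<one>])
    show "reid_rel G \<phi> \<subseteq> carrier G \<times> carrier G" unfolding reid_rel_def by auto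
    show "sym (reid_rel G \<phi>)"
    proof (rule symI)
      fix a b assume "(a,b) \<in> reid_rel G \<phi>"
      then obtain h where hh: "a \<in> carrier G" "b \<in> carrier G" "h \<in> carrier G" "a = h \<otimes> b \<otimes> inv (\<phi> h)"
        unfolding reid_rel_def by auto
      have c1: "inv h \<otimes> (h \<otimes> x) = x" if "x \<in> carrier G" for x
        using hh that by (simp add: m_assoc[symmetric])
      have "\<exists>k\<in>carrier G. b = k \<otimes> a \<otimes> inv (\<phi> k)"
        using hh by (intro bexI[of _ "inv h"]) (simp_all add: m_assoc gh.hom_inv c1)
      thus "(b,a) \<in> reid_rel G \<phi>" unfolding reid_rel_def using hh by blast
    qed
    show "trans (reid_rel G \<phi>)"
    proof (rule transI)
      fix a b c assume "(a,b) \<in> reid_rel G \<phi>" "(b,c) \<in> reid_rel G \<phi>"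
      then obtain h k where hh: "a \<in> carrier G" "b \<in> carrier G" "c \<in> carrier G" "h \<in> carrier G" "k \<in> carrier G"
        "a = h \<otimes> b \<otimes> inv (\<phi> h)" "b = k \<otimes> c \<otimes> inv (\<phi> k)"
        unfolding reid_rel_def by auto
      have "\<exists>x\<in>carrier G. a = x \<otimes> c \<otimes> inv (\<phi> x)"
        using hh by (intro bexI[of _ "h \<otimes> k"]) (simp_all add: m_assoc inv_mult_group)
      thus "(a,c) \<in> reid_rel G \<phi>" unfolding reid_rel_def using hh by blast
    qed
  qed
qed

lemma reid_equiv:
  assumes G: "group G" and h: "\<phi> \<in> hom G G"
  shows "equiv (carrier G) (reid_rel G \<phi>)"
  using group.reid_equiv0[OF G h] .

lemma reid_sub: "reid_rel G \<phi> \<subseteq> carrier G \<times> carrier G"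
  unfolding reid_rel_def by auto

lemma spec_sub:
  assumes G: "group G" and K: "group K" and F: "F \<in> iso K G"
  shows "reidemeister_spectrum G \<subseteq> reidemeister_spectrum K"
proof
  fix x assume "x \<in> reidemeister_spectrum G"
  then obtain \<psi> where psi: "\<psi> \<in> iso G G" and x: "x = reidemeister_number G \<psi>"
    unfolding reidemeister_spectrum_def by auto
  interpret G: group G by fact
  interpret K: group K by fact
  define Fi where "Fi = inv_into (carrier K) F"
  have Fi: "Fi \<in> iso G K" unfolding Fi_def using K.iso_set_sym[OF F] .
  define \<phi> where "\<phi> = Fi \<circ> (\<psi> \<circ> F)"
  have phi: "\<phi> \<in> iso K K" unfolding \<phi>_def by (intro iso_set_trans[OF _ Fi] iso_set_trans[OF F psi])
  have Fhom: "F \<in> hom K G" and Fbij: "bij_betw F (carrier K) (carrier G)" using F by (auto simp: iso_def)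
  interpret FH: group_hom K G F using Fhom G K by (simp add: group_hom_def group_hom_axioms_def)
  have psih: "\<psi> \<in> hom G G" using psi by (auto simp: iso_def)
  have phih: "\<phi> \<in> hom K K" using phi by (auto simp: iso_def)
  have FFi: "F (Fi y) = y" if "y \<in> carrier G" for y
    unfolding Fi_def using Fbij that by (simp add: bij_betw_inv_into_right)
  have FiC: "Fi y \<in> carrier K" if "y \<in> carrier G" for y
    using Fi that by (auto simp: iso_def hom_def)
  have psiC: "\<psi> y \<in> carrier G" if "y \<in> carrier G" for y using psih that by (auto simp: hom_def)
  have Fphi: "F (\<phi> h) = \<psi> (F h)" if "h \<in> carrier K" for h
    unfolding \<phi>_def using that by (simp add: FFi psiC)
  have phiC: "\<phi> h \<in> carrier K" if "h \<in> carrier K" for h using phih that by (auto simp: hom_def)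
  have injF: "inj_on F (carrier K)" using Fbij by (simp add: bij_betw_def)
  have corr: "(a,b) \<in> reid_rel K \<phi> \<longleftrightarrow> (F a, F b) \<in> reid_rel G \<psi>"
    if ab: "a \<in> carrier K" "b \<in> carrier K" for a b
  proof
    assume "(a,b) \<in> reid_rel K \<phi>"
    then obtain h where h: "h \<in> carrier K" "a = h \<otimes>\<^bsub>K\<^esub> b \<otimes>\<^bsub>K\<^esub> inv\<^bsub>K\<^esub> (\<phi> h)"
      unfolding reid_rel_def by auto
    have "F a = F h \<otimes>\<^bsub>G\<^esub> F b \<otimes>\<^bsub>G\<^esub> inv\<^bsub>G\<^esub> (\<psi> (F h))"
      using h ab by (simp add: Fphi phiC)
    moreover have "F a \<in> carrier G" "F b \<in> carrier G" "F h \<in> carrier G" using h ab by auto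
    ultimately show "(F a, F b) \<in> reid_rel G \<psi>" unfolding reid_rel_def by blast
  next
    assume "(F a, F b) \<in> reid_rel G \<psi>"
    then obtain h' where h': "h' \<in> carrier G" "F a = h' \<otimes>\<^bsub>G\<^esub> F b \<otimes>\<^bsub>G\<^esub> inv\<^bsub>G\<^esub> (\<psi> h')"
      unfolding reid_rel_def by auto
    define h where "h = Fi h'"
    have hK: "h \<in> carrier K" unfolding h_def using FiC h' by simp
    have "F a = F (h \<otimes>\<^bsub>K\<^esub> b \<otimes>\<^bsub>K\<^esub> inv\<^bsub>K\<^esub> (\<phi> h))"
      using h' hK ab by (simp add: Fphi phiC h_def FFi)
    hence "a = h \<otimes>\<^bsub>K\<^esub> b \<otimes>\<^bsub>K\<^esub> inv\<^bsub>K\<^esub> (\<phi> h)"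
      using injF ab hK phiC by (simp add: inj_on_def)
    thus "(a,b) \<in> reid_rel K \<phi>" unfolding reid_rel_def using hK ab by auto
  qed
  have eqG: "equiv (carrier G) (reid_rel G \<psi>)" by (rule reid_equiv[OF G psih])
  define \<omega> where "\<omega> = (\<lambda>a. reid_rel G \<psi> `` {F a})"
  have inv: "(a,b) \<in> reid_rel K \<phi> \<longleftrightarrow> \<omega> a = \<omega> b" if "a \<in> carrier K" "b \<in> carrier K" for a b
    unfolding \<omega>_def corr[OF that]
    using eqG that FH.hom_closed by (simp add: equiv_class_eq_iff)
  have img: "\<omega> ` carrier K = carrier G // reid_rel G \<psi>"
  proof -
    have "\<omega> ` carrier K = (\<lambda>y. reid_rel G \<psi> `` {y}) ` (F ` carrier K)"
      unfolding \<omega>_def by (simp add: image_image)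
    also have "F ` carrier K = carrier G" using Fbij by (simp add: bij_betw_def)
    finally show ?thesis unfolding quotient_def by blast
  qed
  have "card (carrier K // reid_rel K \<phi>) = card (carrier G // reid_rel G \<psi>) \<and>
        (finite (carrier K // reid_rel K \<phi>) \<longleftrightarrow> finite (carrier G // reid_rel G \<psi>))"
    using quot_card_inv[OF reid_sub inv] img by simp
  hence "x = reidemeister_number K \<phi>"
    unfolding reidemeister_number_def x by simp
  thus "x \<in> reidemeister_spectrum K" unfolding reidemeister_spectrum_def using phi by blast
qed

lemma spec_eq:
  assumes G: "group G" and K: "group K" and F: "F \<in> iso K G"
  shows "reidemeister_spectrum G = reidemeister_spectrum K"
proof
  show "reidemeister_spectrum G \<subseteq> reidemeister_spectrum K" by (rule spec_sub[OF G K F])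
  show "reidemeister_spectrum K \<subseteq> reidemeister_spectrum G"
    by (rule spec_sub[OF K G group.iso_set_sym[OF K F]])
qed


lemma small_mult: fixes g k :: int assumes "0 < g" "\<bar>g * k\<bar> < g" shows "k = 0"
  by (smt (verit) assms(2) mult_less_cancel_left2 mult_minus_right)

definition LatB :: "int \<Rightarrow> int \<Rightarrow> int \<Rightarrow> int \<Rightarrow> int \<Rightarrow> int \<Rightarrow> (int \<times> int \<times> int) set" where
  "LatB B11 B12 B21 B22 l1 l2 = {(B11 * a1 + B12 * a2, B21 * a1 + B22 * a2, l1 * a1 + l2 * a2 + 2 * \<tau>) | a1 a2 \<tau>. True}"

lemma LatB_I: "(B11 * a1 + B12 * a2, B21 * a1 + B22 * a2, l1 * a1 + l2 * a2 + 2 * \<tau>) \<in> LatB B11 B12 B21 B22 l1 l2"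
  unfolding LatB_def by blast

lemma LatB_E: assumes "z \<in> LatB B11 B12 B21 B22 l1 l2"
  obtains a1 a2 \<tau> where "z = (B11 * a1 + B12 * a2, B21 * a1 + B22 * a2, l1 * a1 + l2 * a2 + 2 * \<tau>)"
  using assms unfolding LatB_def by blast

lemma LatB_diff: assumes "z \<in> LatB B11 B12 B21 B22 l1 l2" "z' \<in> LatB B11 B12 B21 B22 l1 l2"
  shows "z - z' \<in> LatB B11 B12 B21 B22 l1 l2"
proof -
  obtain a1 a2 \<tau> where a: "z = (B11 * a1 + B12 * a2, B21 * a1 + B22 * a2, l1 * a1 + l2 * a2 + 2 * \<tau>)" using assms(1) by (rule LatB_E)
  obtain a1' a2' \<tau>' where b: "z' = (B11 * a1' + B12 * a2', B21 * a1' + B22 * a2', l1 * a1' + l2 * a2' + 2 * \<tau>')" using assms(2) by (rule LatB_E)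
  have eq: "z - z' = (B11 * (a1-a1') + B12 * (a2-a2'), B21 * (a1-a1') + B22 * (a2-a2'), l1 * (a1-a1') + l2 * (a2-a2') + 2 * (\<tau>-\<tau>'))"
    unfolding a b by (simp add: algebra_simps)
  show ?thesis unfolding eq by (rule LatB_I)
qed

lemma LatB_add: assumes "z \<in> LatB B11 B12 B21 B22 l1 l2" "z' \<in> LatB B11 B12 B21 B22 l1 l2"
  shows "z + z' \<in> LatB B11 B12 B21 B22 l1 l2"
proof -
  obtain a1 a2 \<tau> where a: "z = (B11 * a1 + B12 * a2, B21 * a1 + B22 * a2, l1 * a1 + l2 * a2 + 2 * \<tau>)" using assms(1) by (rule LatB_E)
  obtain a1' a2' \<tau>' where b: "z' = (B11 * a1' + B12 * a2', B21 * a1' + B22 * a2', l1 * a1' + l2 * a2' + 2 * \<tau>')" using assms(2) by (rule LatB_E)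
  have eq: "z + z' = (B11 * (a1+a1') + B12 * (a2+a2'), B21 * (a1+a1') + B22 * (a2+a2'), l1 * (a1+a1') + l2 * (a2+a2') + 2 * (\<tau>+\<tau>'))"
    unfolding a b by (simp add: algebra_simps)
  show ?thesis unfolding eq by (rule LatB_I)
qed

lemma box_lemma:
  fixes B11 B12 B21 B22 l1 l2 :: int
  assumes D: "B11 * B22 - B12 * B21 \<noteq> 0"
  shows "\<exists>(\<kappa> :: int\<times>int\<times>int \<Rightarrow> int\<times>int\<times>int) Box. finite Box \<and> card Box = 2 * nat \<bar>B11 * B22 - B12 * B21\<bar> \<and>
     (\<forall>z. \<kappa> z \<in> Box) \<and> (\<forall>r\<in>Box. \<kappa> r = r) \<and>
     (\<forall>z z'. \<kappa> z = \<kappa> z' \<longleftrightarrow> z - z' \<in> LatB B11 B12 B21 B22 l1 l2)"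
proof -
  let ?L = "LatB B11 B12 B21 B22 l1 l2"
  define g where "g = gcd B11 B12"
  have gpos: "g > 0"
  proof -
    have "\<not> (B11 = 0 \<and> B12 = 0)" using D by auto
    thus ?thesis unfolding g_def by simp
  qed
  obtain p1 where p1: "B11 = g * p1" unfolding g_def by (metis dvd_def gcd_dvd1)
  obtain p2 where p2: "B12 = g * p2" unfolding g_def by (metis dvd_def gcd_dvd2)
  obtain s t where st0: "s * B11 + t * B12 = g" unfolding g_def using bezout_int by blast
  have st: "s * p1 + t * p2 = 1"
  proof -
    have "g * (s * p1 + t * p2) = g * 1" using st0 p1 p2 by (simp add: algebra_simps)
    thus ?thesis using gpos by simp
  qed
  define x where "x = B21 * s + B22 * t"
  define y where "y = B22 * p1 - B21 * p2"
  have Dgy: "B11 * B22 - B12 * B21 = g * y" unfolding y_def p1 p2 by (simp add: algebra_simps)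
  have ynz: "y \<noteq> 0" using D Dgy by auto
  define yy where "yy = \<bar>y\<bar>"
  have yypos: "yy > 0" using ynz unfolding yy_def by simp
  have yyy: "y * sgn y = yy" unfolding yy_def by (simp add: abs_sgn mult.commute)
  define lam1 where "lam1 = l1 * s + l2 * t"
  define lam2 where "lam2 = l2 * p1 - l1 * p2"
  define \<kappa> :: "int\<times>int\<times>int \<Rightarrow> int\<times>int\<times>int" where
    "\<kappa> = (\<lambda>(u,w,t0). (u mod g, (w - x * (u div g)) mod yy,
        (t0 - lam1 * (u div g) - lam2 * (((w - x * (u div g)) div yy) * sgn y)) mod 2))"
  define Box where "Box = {0..<g} \<times> {0..<yy} \<times> {0..<(2::int)}"
  have finB: "finite Box" unfolding Box_def by simp
  have cardB: "card Box = 2 * nat \<bar>B11 * B22 - B12 * B21\<bar>"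
  proof -
    have "card Box = nat g * (nat yy * 2)" unfolding Box_def by (simp add: card_cartesian_product)
    also have "\<dots> = 2 * nat (g * yy)" using gpos yypos by (simp add: nat_mult_distrib)
    also have "g * yy = \<bar>B11 * B22 - B12 * B21\<bar>" unfolding Dgy yy_def using gpos by (simp add: abs_mult)
    finally show ?thesis .
  qed
  have inB: "\<kappa> z \<in> Box" for z
    unfolding Box_def \<kappa>_def using gpos yypos by (cases z) auto
  have fixB: "\<kappa> r = r" if "r \<in> Box" for r
  proof -
    obtain u w t0 where r: "r = (u,w,t0)" by (cases r)
    have h: "0 \<le> u" "u < g" "0 \<le> w" "w < yy" "0 \<le> t0" "t0 < 2" using that unfolding r Box_def by auto
    have "u div g = 0" "u mod g = u" using h by auto
    moreover have "w div yy = 0" "w mod yy = w" using h by auto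
    moreover have "t0 mod 2 = t0" using h by auto
    ultimately show ?thesis unfolding r \<kappa>_def by simp
  qed
  have K1: "z - \<kappa> z \<in> ?L" for z
  proof -
    obtain u w t0 where z: "z = (u,w,t0)" by (cases z)
    define k where "k = u div g"
    define l' where "l' = (w - x * k) div yy"
    define l where "l = l' * sgn y"
    define \<tau> where "\<tau> = (t0 - lam1 * k - lam2 * l) div 2"
    define a1 where "a1 = s * k - p2 * l"
    define a2 where "a2 = t * k + p1 * l"
    have kz: "\<kappa> z = (u mod g, (w - x * k) mod yy, (t0 - lam1 * k - lam2 * l) mod 2)"
      unfolding z \<kappa>_def k_def l_def l'_def by simp
    have e1: "u - u mod g = B11 * a1 + B12 * a2"
    proof -
      have "B11 * a1 + B12 * a2 = g * k * (s * p1 + t * p2)" unfolding a1_def a2_def p1 p2 by (simp add: algebra_simps)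
      also have "\<dots> = g * k" using st by simp
      also have "\<dots> = u - u mod g" unfolding k_def by (simp add: minus_mod_eq_mult_div)
      finally show ?thesis by simp
    qed
    have e2: "w - (w - x * k) mod yy = B21 * a1 + B22 * a2"
    proof -
      have "w - (w - x * k) mod yy = x * k + yy * l'" unfolding l'_def by (simp add: minus_mod_eq_mult_div[symmetric] algebra_simps)
      also have "yy * l' = y * l" unfolding l_def yyy[symmetric] by (simp add: algebra_simps)
      also have "x * k + y * l = B21 * a1 + B22 * a2" unfolding x_def y_def a1_def a2_def by (simp add: algebra_simps)
      finally show ?thesis .
    qed
    have e3: "t0 - (t0 - lam1 * k - lam2 * l) mod 2 = l1 * a1 + l2 * a2 + 2 * \<tau>"
    proof -
      have "t0 - (t0 - lam1 * k - lam2 * l) mod 2 = lam1 * k + lam2 * l + 2 * \<tau>" unfolding \<tau>_def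
        by (simp add: minus_mod_eq_mult_div[symmetric] algebra_simps)
      also have "lam1 * k + lam2 * l = l1 * a1 + l2 * a2" unfolding lam1_def lam2_def a1_def a2_def by (simp add: algebra_simps)
      finally show ?thesis .
    qed
    have eq: "z - \<kappa> z = (B11 * a1 + B12 * a2, B21 * a1 + B22 * a2, l1 * a1 + l2 * a2 + 2 * \<tau>)"
      using kz e1 e2 e3 z by simp
    show ?thesis unfolding eq by (rule LatB_I)
  qed
  have K2: "r = r'" if hr: "r \<in> Box" "r' \<in> Box" "r - r' \<in> ?L" for r r'
  proof -
    obtain u w t0 where r: "r = (u,w,t0)" by (cases r)
    obtain u' w' t0' where r': "r' = (u',w',t0')" by (cases r')
    have h: "0 \<le> u" "u < g" "0 \<le> w" "w < yy" "0 \<le> t0" "t0 < 2"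
            "0 \<le> u'" "u' < g" "0 \<le> w'" "w' < yy" "0 \<le> t0'" "t0' < 2"
      using hr(1,2) unfolding r r' Box_def by auto
    obtain a1 a2 \<tau> where vv: "r - r' = (B11 * a1 + B12 * a2, B21 * a1 + B22 * a2, l1 * a1 + l2 * a2 + 2 * \<tau>)"
      using hr(3) by (rule LatB_E)
    have c1: "u - u' = B11 * a1 + B12 * a2" and c2: "w - w' = B21 * a1 + B22 * a2" and c3: "t0 - t0' = l1 * a1 + l2 * a2 + 2 * \<tau>"
      using vv unfolding r r' by auto
    define k where "k = p1 * a1 + p2 * a2"
    define l where "l = -t * a1 + s * a2"
    have "B11 * a1 + B12 * a2 = g * k" unfolding k_def p1 p2 by (simp add: algebra_simps)
    hence "\<bar>g * k\<bar> < g" using c1 h by linarith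
    hence k0: "k = 0" using small_mult gpos by blast
    have "B21 * a1 + B22 * a2 = (B21 * a1 + B22 * a2) * (s * p1 + t * p2)" using st by simp
    also have "\<dots> = x * k + y * l" unfolding x_def y_def k_def l_def by (simp add: algebra_simps)
    finally have "B21 * a1 + B22 * a2 = y * l" using k0 by simp
    hence "\<bar>y * l\<bar> < yy" using c2 h by linarith
    hence "\<bar>yy * l\<bar> < yy" by (simp add: yy_def abs_mult)
    hence l0: "l = 0" using small_mult yypos by blast
    have "a1 = a1 * (s * p1 + t * p2)" using st by simp
    also have "\<dots> = s * k - p2 * l" unfolding k_def l_def by (simp add: algebra_simps)
    finally have a10: "a1 = 0" using k0 l0 by simp
    have "a2 = a2 * (s * p1 + t * p2)" using st by simp
    also have "\<dots> = t * k + p1 * l" unfolding k_def l_def by (simp add: algebra_simps)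
    finally have a20: "a2 = 0" using k0 l0 by simp
    have "t0 - t0' = 2 * \<tau>" using c3 a10 a20 by simp
    hence "t0 = t0'" using h by presburger
    moreover have "u = u'" using c1 a10 a20 by simp
    moreover have "w = w'" using c2 a10 a20 by simp
    ultimately show ?thesis unfolding r r' by simp
  qed
  have K5: "\<kappa> z = \<kappa> z' \<longleftrightarrow> z - z' \<in> ?L" for z z'
  proof
    assume "\<kappa> z = \<kappa> z'"
    hence "z - z' = (z - \<kappa> z) - (z' - \<kappa> z')" by (simp add: algebra_simps)
    thus "z - z' \<in> ?L" using K1 LatB_diff by metis
  next
    assume a: "z - z' \<in> ?L"
    have "\<kappa> z - \<kappa> z' = (z - z') - (z - \<kappa> z) + (z' - \<kappa> z')" by (simp add: algebra_simps)
    hence "\<kappa> z - \<kappa> z' \<in> ?L" using a K1 LatB_diff LatB_add by metis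
    thus "\<kappa> z = \<kappa> z'" using K2 inB by blast
  qed
  show ?thesis
    apply (rule exI[of _ \<kappa>], rule exI[of _ Box])
    using finB cardB inB fixB K5 by blast
qed


definition sg :: "int\<times>int\<times>int \<Rightarrow> int\<times>int\<times>int" where
  "sg = (\<lambda>(u,w,t). (-u, -w, u + t))"
definition Mv :: "int \<Rightarrow> int \<Rightarrow> int \<Rightarrow> int \<Rightarrow> int \<Rightarrow> int\<times>int\<times>int \<Rightarrow> int\<times>int\<times>int" where
  "Mv a b c mu nu = (\<lambda>(u,w,t). ((a - 2 * b) * u - 2 * c * w, mu * u + nu * w, b * u + c * w + a * t))"
definition dv :: "int \<Rightarrow> int \<Rightarrow> int\<times>int\<times>int" where
  "dv e dq = (-2 * e, dq, e)"
definition PR :: "int \<Rightarrow> int \<Rightarrow> int \<Rightarrow> int \<Rightarrow> int \<Rightarrow> int \<Rightarrow> int \<Rightarrow> int\<times>int\<times>int \<Rightarrow> int\<times>int\<times>int \<Rightarrow> bool" where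
  "PR a b c mu nu e dq z z' \<longleftrightarrow> (\<exists>x. z = z' + (x - Mv a b c mu nu x)) \<or> (\<exists>x. z = sg z' - dv e dq + (x - Mv a b c mu nu x))"

lemma sg_simp[simp]: "sg (u,w,t) = (-u, -w, u + t)" by (simp add: sg_def)
lemma Mv_simp[simp]: "Mv a b c mu nu (u,w,t) = ((a - 2 * b) * u - 2 * c * w, mu * u + nu * w, b * u + c * w + a * t)"
  by (simp add: Mv_def)
lemma sg_diff: "sg (x - y) = sg x - sg y" by (cases x, cases y) simp
lemma sg_sg: "sg (sg x) = x" by (cases x) simp

lemma range_IM:
  "range (\<lambda>x. x - Mv (-1) b c mu (2 * n + 1) x) = LatB (2 * (1 + b)) (2 * c) (- mu) (- 2 * n) (- b) (- c)"
proof (intro equalityI subsetI)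
  fix z assume "z \<in> range (\<lambda>x. x - Mv (-1) b c mu (2 * n + 1) x)"
  then obtain u w t where z: "z = (u,w,t) - Mv (-1) b c mu (2 * n + 1) (u,w,t)" by auto
  have "z = (2 * (1 + b) * u + 2 * c * w, (- mu) * u + (- 2 * n) * w, (- b) * u + (- c) * w + 2 * t)"
    unfolding z by (simp add: algebra_simps)
  thus "z \<in> LatB (2 * (1 + b)) (2 * c) (- mu) (- 2 * n) (- b) (- c)" by (simp only: LatB_I)
next
  fix z assume "z \<in> LatB (2 * (1 + b)) (2 * c) (- mu) (- 2 * n) (- b) (- c)"
  then obtain u w t where z: "z = (2 * (1 + b) * u + 2 * c * w, (- mu) * u + (- 2 * n) * w, (- b) * u + (- c) * w + 2 * t)"
    by (rule LatB_E)
  have "z = (u,w,t) - Mv (-1) b c mu (2 * n + 1) (u,w,t)"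
    unfolding z by (simp add: algebra_simps)
  thus "z \<in> range (\<lambda>x. x - Mv (-1) b c mu (2 * n + 1) x)" by blast
qed

lemma ex_range: "(\<exists>x. z = z' + F x) \<longleftrightarrow> (z::'a::ab_group_add) - z' \<in> range F"
proof
  assume "\<exists>x. z = z' + F x" then obtain x where "z = z' + F x" by blast
  thus "z - z' \<in> range F" by simp
next
  assume "z - z' \<in> range F" then obtain x where "z - z' = F x" by blast
  hence "z = F x + z'" by (simp add: diff_eq_eq)
  thus "\<exists>x. z = z' + F x" by (metis add.commute)
qed

lemma part_fin:
  fixes b c mu n e dq D :: int
  assumes Ddef: "D = - 4 * n * (1 + b) + 2 * c * mu" and Dnz: "D \<noteq> 0"
  shows "\<exists>\<omega> :: int\<times>int\<times>int \<Rightarrow> (int\<times>int\<times>int) set.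
     (\<forall>z z'. PR (-1) b c mu (2 * n + 1) e dq z z' \<longleftrightarrow> \<omega> z = \<omega> z') \<and> finite (range \<omega>) \<and>
     2 * card (range \<omega>) = 2 * nat \<bar>D\<bar> + (if even dq then 4 else 0)"
proof -
  define L where "L = LatB (2 * (1 + b)) (2 * c) (- mu) (- 2 * n) (- b) (- c)"
  have detL: "(2 * (1 + b)) * (- 2 * n) - (2 * c) * (- mu) = D" unfolding Ddef by (simp add: algebra_simps)
  obtain \<kappa> :: "int\<times>int\<times>int \<Rightarrow> int\<times>int\<times>int" and Box where
    finB: "finite Box" and cardB: "card Box = 2 * nat \<bar>D\<bar>" and inB: "\<And>z. \<kappa> z \<in> Box"
    and fixB: "\<And>r. r \<in> Box \<Longrightarrow> \<kappa> r = r" and kL: "\<And>z z'. \<kappa> z = \<kappa> z' \<longleftrightarrow> z - z' \<in> L"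
    using box_lemma[of "2 * (1 + b)" "- 2 * n" "2 * c" "- mu" "- b" "- c"] Dnz unfolding detL L_def by metis
  define d where "d = dv e dq"
  define s where "s = (\<lambda>z. sg z - d)"
  have IM: "range (\<lambda>x. x - Mv (-1) b c mu (2 * n + 1) x) = L" unfolding L_def by (rule range_IM)
  have PR_L: "PR (-1) b c mu (2 * n + 1) e dq z z' \<longleftrightarrow> z - z' \<in> L \<or> z - s z' \<in> L" for z z'
  proof -
    have "(\<exists>x. z = z' + (x - Mv (-1) b c mu (2 * n + 1) x)) \<longleftrightarrow> z - z' \<in> L"
      unfolding IM[symmetric] by (rule ex_range)
    moreover have "(\<exists>x. z = sg z' - dv e dq + (x - Mv (-1) b c mu (2 * n + 1) x)) \<longleftrightarrow> z - s z' \<in> L"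
      unfolding IM[symmetric] s_def d_def by (rule ex_range)
    ultimately show ?thesis unfolding PR_def by blast
  qed
  have sgL: "sg z \<in> L" if "z \<in> L" for z
  proof -
    from that obtain u w t where z: "z = (2 * (1 + b) * u + 2 * c * w, (- mu) * u + (- 2 * n) * w, (- b) * u + (- c) * w + 2 * t)"
      unfolding L_def by (rule LatB_E)
    have "sg z = (2 * (1 + b) * (-u) + 2 * c * (-w), (- mu) * (-u) + (- 2 * n) * (-w), (- b) * (-u) + (- c) * (-w) + 2 * (u+t))"
      unfolding z by (simp add: algebra_simps)
    thus ?thesis unfolding L_def by (simp only: LatB_I)
  qed
  have sd: "sg d + d = 0" unfolding d_def dv_def by (simp add: zero_prod_def)
  have ss: "s (s z) = z" for z
  proof -
    have "s (s z) = sg (sg z) - (sg d + d)" unfolding s_def by (simp add: sg_diff algebra_simps)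
    thus ?thesis using sd by (simp add: sg_sg)
  qed
  have sdiff: "s z - s z' = sg (z - z')" for z z' unfolding s_def by (simp add: sg_diff)
  have ks: "\<kappa> (s z) = \<kappa> (s (\<kappa> z))" for z
  proof -
    have "z - \<kappa> z \<in> L" using kL[of z "\<kappa> z"] fixB[OF inB[of z]] by simp
    hence "s z - s (\<kappa> z) \<in> L" using sdiff sgL by simp
    thus ?thesis using kL by simp
  qed
  define sb where "sb = (\<lambda>r. \<kappa> (s r))"
  have sbB: "sb r \<in> Box" for r unfolding sb_def by (rule inB)
  have sbsb: "sb (sb r) = r" if "r \<in> Box" for r
    unfolding sb_def using ks[of "s r"] ss fixB[OF that] by simp
  have PR_k: "PR (-1) b c mu (2 * n + 1) e dq z z' \<longleftrightarrow> \<kappa> z = \<kappa> z' \<or> \<kappa> z = sb (\<kappa> z')" for z z'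
    unfolding PR_L kL[symmetric] sb_def using ks by simp
  define \<omega> where "\<omega> = (\<lambda>z. {\<kappa> z, sb (\<kappa> z)})"
  have orbeq: "{x, sb x} = {y, sb y} \<longleftrightarrow> x = y \<or> x = sb y" if "x \<in> Box" "y \<in> Box" for x y
  proof
    assume "{x, sb x} = {y, sb y}" thus "x = y \<or> x = sb y" by (metis insertI1 insert_iff singletonD)
  next
    assume "x = y \<or> x = sb y"
    thus "{x, sb x} = {y, sb y}"
    proof
      assume "x = sb y" thus ?thesis using sbsb[OF that(2)] by auto
    qed simp
  qed
  have om: "PR (-1) b c mu (2 * n + 1) e dq z z' \<longleftrightarrow> \<omega> z = \<omega> z'" for z z'
    unfolding PR_k \<omega>_def using orbeq[OF inB inB] by simp
  have rk: "range \<kappa> = Box"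
  proof
    show "range \<kappa> \<subseteq> Box" using inB by auto
    show "Box \<subseteq> range \<kappa>" using fixB by (metis rangeI subsetI)
  qed
  have rom: "range \<omega> = (\<lambda>r. {r, sb r}) ` Box" unfolding \<omega>_def rk[symmetric] by (simp add: image_image)
  have cnt: "2 * card (range \<omega>) = card Box + card {r\<in>Box. sb r = r}"
    unfolding rom by (rule orbit_count[OF finB]) (use sbB sbsb in auto)
  have Fix_iff: "sb r = r \<longleftrightarrow> s r - r \<in> L" if "r \<in> Box" for r
    unfolding sb_def using kL[of "s r" r] fixB[OF that] by simp
  have fixcount: "card {r\<in>Box. sb r = r} = (if even dq then 4 else 0)"
  proof (cases "even dq")
    case False
    have "s z - z \<notin> L" for z
    proof
      assume "s z - z \<in> L"
      obtain u w t where zz: "z = (u,w,t)" by (cases z)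
      obtain a1 a2 \<tau> where ee: "s z - z = (2 * (1 + b) * a1 + 2 * c * a2, (- mu) * a1 + (- 2 * n) * a2, (- b) * a1 + (- c) * a2 + 2 * \<tau>)"
        using \<open>s z - z \<in> L\<close> unfolding L_def by (rule LatB_E)
      have e1: "2 * e - 2 * u = 2 * (1 + b) * a1 + 2 * c * a2" and e2: "- 2 * w - dq = (- mu) * a1 + (- 2 * n) * a2"
        and e3: "u - e = (- b) * a1 + (- c) * a2 + 2 * \<tau>"
        using ee unfolding zz s_def d_def dv_def by (simp_all add: algebra_simps)
      have "(2 * e - 2 * u) + 2 * (u - e) = (2 * (1 + b) * a1 + 2 * c * a2) + 2 * ((- b) * a1 + (- c) * a2 + 2 * \<tau>)"
        using e1 e3 by simp
      hence "0 = 2 * a1 + 4 * \<tau>" by (simp add: algebra_simps)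
      hence a1: "a1 = - 2 * \<tau>" by simp
      have "dq = 2 * (- w - mu * \<tau> + n * a2)" using e2 unfolding a1 by (simp add: algebra_simps)
      thus False using False by simp
    qed
    hence E: "{r\<in>Box. sb r = r} = {}" using Fix_iff by auto
    show ?thesis unfolding E using False by simp
  next
    case True
    then obtain h where h: "dq = 2 * h" by (auto elim: evenE)
    define q where "q = (\<lambda>(\<rho>::int, t'::int). (e - \<rho> * c, - h + \<rho> * n, t'))"
    define I where "I = {0,1::int} \<times> {0,1::int}"
    have F1: "\<exists>p\<in>I. z - q p \<in> L" if hs: "s z - z \<in> L" for z
    proof -
      obtain u w t where zz: "z = (u,w,t)" by (cases z)
      obtain a1 a2 \<tau> where ee: "s z - z = (2 * (1 + b) * a1 + 2 * c * a2, (- mu) * a1 + (- 2 * n) * a2, (- b) * a1 + (- c) * a2 + 2 * \<tau>)"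
        using hs unfolding L_def by (rule LatB_E)
      have e1: "2 * e - 2 * u = 2 * (1 + b) * a1 + 2 * c * a2" and e2: "- 2 * w - dq = (- mu) * a1 + (- 2 * n) * a2"
        and e3: "u - e = (- b) * a1 + (- c) * a2 + 2 * \<tau>"
        using ee unfolding zz s_def d_def dv_def by (simp_all add: algebra_simps)
      have "(2 * e - 2 * u) + 2 * (u - e) = (2 * (1 + b) * a1 + 2 * c * a2) + 2 * ((- b) * a1 + (- c) * a2 + 2 * \<tau>)"
        using e1 e3 by simp
      hence "0 = 2 * a1 + 4 * \<tau>" by (simp add: algebra_simps)
      hence a1: "a1 = - 2 * \<tau>" by simp
      define \<rho> where "\<rho> = a2 mod 2"
      define j where "j = a2 div 2"
      have a2: "a2 = 2 * j + \<rho>" unfolding \<rho>_def j_def by simp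
      define t' where "t' = (t + b * \<tau> - c * j) mod 2"
      define \<tau>' where "\<tau>' = (t + b * \<tau> - c * j) div 2"
      have pI: "(\<rho>, t') \<in> I" unfolding I_def \<rho>_def t'_def by auto
      have U: "u = e + 2 * (1 + b) * \<tau> - c * a2" using e1 unfolding a1 by (simp add: algebra_simps)
      have W: "w = - h - mu * \<tau> + n * a2" using e2 unfolding a1 h by (simp add: algebra_simps)
      have T: "t = t' + 2 * \<tau>' - b * \<tau> + c * j" unfolding t'_def \<tau>'_def by simp
      have "z - q (\<rho>, t') = (2 * (1 + b) * \<tau> + 2 * c * (-j), (- mu) * \<tau> + (- 2 * n) * (-j), (- b) * \<tau> + (- c) * (-j) + 2 * \<tau>')"
        unfolding zz q_def using U W T a2 by (simp add: algebra_simps)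
      hence "z - q (\<rho>, t') \<in> L" unfolding L_def by (simp only: LatB_I)
      thus ?thesis using pI by blast
    qed
    have F2: "s (q p) - q p \<in> L" for p
    proof -
      obtain \<rho> t' where p: "p = (\<rho>, t')" by (cases p)
      have "s (q p) - q p = (2 * (1 + b) * 0 + 2 * c * \<rho>, (- mu) * 0 + (- 2 * n) * \<rho>, (- b) * 0 + (- c) * \<rho> + 2 * 0)"
        unfolding p q_def s_def d_def dv_def h by (simp add: algebra_simps)
      thus ?thesis unfolding L_def by (simp only: LatB_I)
    qed
    have F3: "p = p'" if hp: "p \<in> I" "p' \<in> I" "q p - q p' \<in> L" for p p'
    proof -
      obtain \<rho> t' where p: "p = (\<rho>, t')" by (cases p)
      obtain \<rho>' t'' where p': "p' = (\<rho>', t'')" by (cases p')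
      have rng: "\<rho> \<in> {0,1}" "t' \<in> {0,1}" "\<rho>' \<in> {0,1}" "t'' \<in> {0,1}" using hp(1,2) unfolding p p' I_def by auto
      obtain a1 a2 \<tau> where ee: "q p - q p' = (2 * (1 + b) * a1 + 2 * c * a2, (- mu) * a1 + (- 2 * n) * a2, (- b) * a1 + (- c) * a2 + 2 * \<tau>)"
        using hp(3) unfolding L_def by (rule LatB_E)
      define X where "X = 2 * a2 + (\<rho> - \<rho>')"
      have e1: "(2 + 2 * b) * a1 + c * X = 0" and e2: "mu * a1 + n * X = 0"
        and e3: "t' - t'' = (- b) * a1 + (- c) * a2 + 2 * \<tau>"
        using ee unfolding p p' q_def X_def by (simp_all add: algebra_simps)
      have det: "(2 + 2 * b) * n - c * mu \<noteq> 0" using Dnz unfolding Ddef by (simp add: algebra_simps)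
      have "((2 + 2 * b) * n - c * mu) * a1 = n * ((2 + 2 * b) * a1 + c * X) - c * (mu * a1 + n * X)"
        by (simp add: algebra_simps)
      hence "((2 + 2 * b) * n - c * mu) * a1 = 0" using e1 e2 by simp
      hence a10: "a1 = 0" using det by simp
      have X0: "X = 0"
      proof (rule ccontr)
        assume "X \<noteq> 0"
        hence "c = 0" "n = 0" using e1 e2 a10 by auto
        thus False using det by simp
      qed
      have "\<rho> = \<rho>'" using X0 rng unfolding X_def by auto presburger+
      moreover have "a2 = 0" using X0 \<open>\<rho> = \<rho>'\<close> unfolding X_def by simp
      moreover have "t' = t''" using e3 a10 \<open>a2 = 0\<close> rng by auto presburger+
      ultimately show ?thesis unfolding p p' by simp
    qed
    have FixEq: "{r\<in>Box. sb r = r} = \<kappa> ` (q ` I)"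
    proof (intro equalityI subsetI)
      fix r assume "r \<in> {r\<in>Box. sb r = r}"
      hence r0: "r \<in> Box" "sb r = r" by auto
      hence r: "r \<in> Box" "s r - r \<in> L" using Fix_iff[OF r0(1)] by auto
      obtain p where p: "p \<in> I" "r - q p \<in> L" using F1[OF r(2)] by blast
      have "r = \<kappa> (q p)" using kL[of r "q p"] p(2) fixB[OF r(1)] by simp
      thus "r \<in> \<kappa> ` (q ` I)" using p(1) by blast
    next
      fix r assume "r \<in> \<kappa> ` (q ` I)"
      then obtain p where p: "p \<in> I" "r = \<kappa> (q p)" by blast
      have "sb r = \<kappa> (s (q p))" unfolding sb_def p(2) using ks by simp
      also have "\<dots> = \<kappa> (q p)" using kL F2[of p] by simp
      finally show "r \<in> {r\<in>Box. sb r = r}" using p(2) inB by simp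
    qed
    have inj: "inj_on (\<kappa> \<circ> q) I"
    proof (rule inj_onI)
      fix p p' assume "p \<in> I" "p' \<in> I" "(\<kappa> \<circ> q) p = (\<kappa> \<circ> q) p'"
      thus "p = p'" using F3 kL by simp
    qed
    have "card I = 4" unfolding I_def by (simp add: card_cartesian_product)
    hence "card ((\<kappa> \<circ> q) ` I) = 4" using card_image[OF inj] by simp
    hence "card {r\<in>Box. sb r = r} = 4" unfolding FixEq by (simp add: image_comp)
    thus ?thesis using True by simp
  qed
  have "finite (range \<omega>)" unfolding rom using finB by simp
  thus ?thesis using om cnt cardB fixcount by (intro exI[of _ \<omega>]) simp
qed


lemma unbounded_infinite:
  fixes A :: "int set"
  assumes "\<And>M. \<exists>x\<in>A. M < x"
  shows "infinite A"
proof
  assume f: "finite A"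
  obtain x where x: "x \<in> A" "Max A < x" using assms[of "Max A"] by blast
  have "x \<le> Max A" using Max_ge[OF f x(1)] .
  thus False using x(2) by simp
qed

definition om1 :: "int\<times>int\<times>int \<Rightarrow> int" where "om1 = (\<lambda>(u,w,t). u + 2 * t)"

lemma part_inf1:
  "PR 1 b c mu nu e dq z z' \<Longrightarrow> om1 z = om1 z'"
proof -
  obtain u w t where z: "z = (u,w,t)" by (cases z)
  obtain u' w' t' where z': "z' = (u',w',t')" by (cases z')
  assume "PR 1 b c mu nu e dq z z'"
  then obtain x where "z = z' + (x - Mv 1 b c mu nu x) \<or> z = sg z' - dv e dq + (x - Mv 1 b c mu nu x)"
    unfolding PR_def by blast
  moreover obtain x1 x2 x3 where x: "x = (x1,x2,x3)" by (cases x)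
  ultimately show ?thesis unfolding z z' x om1_def dv_def by (auto simp: algebra_simps)
qed

lemma om1_unb: "infinite (range om1)"
  by (rule unbounded_infinite) (metis (no_types, lifting) case_prod_conv less_add_one mult_zero_right add_0_right om1_def rangeI)

lemma lam_exists:
  fixes B11 B12 B21 B22 :: int
  assumes "B11 * B22 - B12 * B21 = 0"
  shows "\<exists>l1 l2. (l1 \<noteq> 0 \<or> l2 \<noteq> 0) \<and> l1 * B11 + l2 * B21 = 0 \<and> l1 * B12 + l2 * B22 = 0"
proof (cases "B11 = 0 \<and> B21 = 0")
  case True
  show ?thesis
  proof (cases "B12 = 0 \<and> B22 = 0")
    case True
    thus ?thesis using \<open>B11 = 0 \<and> B21 = 0\<close> by (intro exI[of _ 1] exI[of _ 0]) simp
  next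
    case False
    thus ?thesis using \<open>B11 = 0 \<and> B21 = 0\<close> by (intro exI[of _ B22] exI[of _ "- B12"]) (auto simp: algebra_simps)
  qed
next
  case False
  thus ?thesis using assms by (intro exI[of _ B21] exI[of _ "- B11"]) (auto simp: algebra_simps)
qed

lemma part_inf2:
  fixes b c mu n e dq :: int
  assumes D0: "- 4 * n * (1 + b) + 2 * c * mu = 0"
  shows "\<exists>\<omega> :: int\<times>int\<times>int \<Rightarrow> int. (\<forall>z z'. PR (-1) b c mu (2 * n + 1) e dq z z' \<longrightarrow> \<omega> z = \<omega> z') \<and> infinite (range \<omega>)"
proof -
  obtain l1 l2 where l: "l1 \<noteq> 0 \<or> l2 \<noteq> 0" "l1 * (2 * (1 + b)) + l2 * (- mu) = 0" "l1 * (2 * c) + l2 * (- 2 * n) = 0"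
    using lam_exists[of "2 * (1 + b)" "- 2 * n" "2 * c" "- mu"] D0 by (auto simp: algebra_simps)
  define C where "C = l1 * 2 * e - l2 * dq"
  define \<omega> where "\<omega> = (\<lambda>(u::int,w::int,t::int). \<bar>2 * (l1 * u + l2 * w) - C\<bar>)"
  have inv: "\<omega> z = \<omega> z'" if hP: "PR (-1) b c mu (2 * n + 1) e dq z z'" for z z'
  proof -
    obtain u w t where z: "z = (u,w,t)" by (cases z)
    obtain u' w' t' where z': "z' = (u',w',t')" by (cases z')
    obtain x where "z = z' + (x - Mv (-1) b c mu (2 * n + 1) x) \<or> z = sg z' - dv e dq + (x - Mv (-1) b c mu (2 * n + 1) x)"
      using hP unfolding PR_def by blast
    moreover obtain x1 x2 x3 where x: "x = (x1,x2,x3)" by (cases x)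
    ultimately have disj: "(u = u' + 2 * (1 + b) * x1 + 2 * c * x2 \<and> w = w' - mu * x1 - 2 * n * x2) \<or>
      (u = - u' + 2 * e + 2 * (1 + b) * x1 + 2 * c * x2 \<and> w = - w' - dq - mu * x1 - 2 * n * x2)"
      unfolding z z' x dv_def by (auto simp: algebra_simps)
    have K0: "l1 * (2 * (1 + b) * x1 + 2 * c * x2) + l2 * (- mu * x1 - 2 * n * x2) = 0"
    proof -
      have "l1 * (2 * (1 + b) * x1 + 2 * c * x2) + l2 * (- mu * x1 - 2 * n * x2)
          = x1 * (l1 * (2 * (1 + b)) + l2 * (- mu)) + x2 * (l1 * (2 * c) + l2 * (- 2 * n))" by (simp add: algebra_simps)
      thus ?thesis using l by simp
    qed
    from disj have "2 * (l1 * u + l2 * w) - C = 2 * (l1 * u' + l2 * w') - C \<or>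
                     2 * (l1 * u + l2 * w) - C = - (2 * (l1 * u' + l2 * w') - C)"
    proof
      assume "u = u' + 2 * (1 + b) * x1 + 2 * c * x2 \<and> w = w' - mu * x1 - 2 * n * x2"
      hence hu: "u = u' + 2 * (1 + b) * x1 + 2 * c * x2" and hw: "w = w' - mu * x1 - 2 * n * x2" by auto
      have "2 * (l1 * u + l2 * w) - C = 2 * (l1 * u' + l2 * w') - C + 2 * (l1 * (2 * (1 + b) * x1 + 2 * c * x2) + l2 * (- mu * x1 - 2 * n * x2))"
        unfolding hu hw by (simp add: algebra_simps)
      thus ?thesis using K0 by simp
    next
      assume "u = - u' + 2 * e + 2 * (1 + b) * x1 + 2 * c * x2 \<and> w = - w' - dq - mu * x1 - 2 * n * x2"
      hence hu: "u = - u' + 2 * e + 2 * (1 + b) * x1 + 2 * c * x2" and hw: "w = - w' - dq - mu * x1 - 2 * n * x2" by auto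
      have "2 * (l1 * u + l2 * w) - C = - (2 * (l1 * u' + l2 * w') - C) + 2 * (l1 * (2 * (1 + b) * x1 + 2 * c * x2) + l2 * (- mu * x1 - 2 * n * x2))"
        unfolding hu hw C_def by (simp add: algebra_simps)
      thus ?thesis using K0 by simp
    qed
    thus ?thesis unfolding z z' \<omega>_def by auto
  qed
  have unb: "\<exists>y\<in>range \<omega>. M < y" for M
  proof -
    define S where "S = l1 * l1 + l2 * l2"
    have S1: "S \<ge> 1" unfolding S_def using l(1)
      by (metis add.commute add_increasing2 mult_pos_pos not_less zero_less_mult_pos zero_less_one_class.zero_le_one zmult_zless_mono2 linorder_neqE_linordered_idom mult_neg_neg le_less_trans zero_less_mult_iff int_one_le_iff_zero_less zero_le_square)
    define k where "k = \<bar>M\<bar> + \<bar>C\<bar> + 1"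
    have k0: "k \<ge> 0" unfolding k_def by simp
    have "k * S \<ge> k * 1" using S1 k0 by (intro mult_left_mono) auto
    hence "2 * (l1 * (k * l1) + l2 * (k * l2)) - C > M" unfolding k_def S_def by (simp add: algebra_simps) linarith
    hence "\<omega> (k * l1, k * l2, 0) > M" unfolding \<omega>_def by simp
    thus ?thesis by blast
  qed
  show ?thesis using inv unbounded_infinite[OF unb] by blast
qed


type_synonym el = "(int\<times>int\<times>int) \<times> bool"

definition hm :: "el \<Rightarrow> el \<Rightarrow> el" where
  "hm g h = (fst g + (if snd g then sg (fst h) else fst h), snd g \<noteq> snd h)"

definition HG :: "el monoid" where
  "HG = \<lparr>carrier = UNIV, mult = hm, one = (0, False)\<rparr>"

definition hinv :: "el \<Rightarrow> el" where
  "hinv g = (if snd g then - sg (fst g) else - fst g, snd g)"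

lemma sg_add: "sg (x + y) = sg x + sg y" by (cases x, cases y) simp
lemma sg_uminus: "sg (- x) = - sg x" by (cases x) simp
lemma sg_zero: "sg 0 = 0" by (simp add: zero_prod_def)

lemma HG_simps[simp]: "carrier HG = UNIV" "mult HG = hm" "one HG = (0, False)"
  by (simp_all add: HG_def)

lemma group_HG: "group HG"
proof (rule groupI)
  fix x y z :: el
  show "x \<otimes>\<^bsub>HG\<^esub> y \<otimes>\<^bsub>HG\<^esub> z = x \<otimes>\<^bsub>HG\<^esub> (y \<otimes>\<^bsub>HG\<^esub> z)"
    by (cases x, cases y, cases z) (auto simp: hm_def sg_add sg_sg algebra_simps)
next
  fix x :: el
  show "\<exists>y\<in>carrier HG. y \<otimes>\<^bsub>HG\<^esub> x = \<one>\<^bsub>HG\<^esub>"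
    by (rule bexI[of _ "hinv x"]) (cases x, auto simp: hm_def hinv_def sg_uminus sg_sg)
qed (auto simp: hm_def)

lemma inv_HG[simp]: "inv\<^bsub>HG\<^esub> g = hinv g"
  by (rule group.inv_equality[OF group_HG]) (cases g, auto simp: hm_def hinv_def sg_uminus sg_sg)

definition Phi :: "int \<Rightarrow> int \<Rightarrow> int \<Rightarrow> int \<Rightarrow> int \<Rightarrow> int \<Rightarrow> int \<Rightarrow> el \<Rightarrow> el" where
  "Phi a b c mu nu e d2 = (\<lambda>(z,E). (Mv a b c mu nu z + (if E then dv e d2 else 0), E))"

lemma sg_Mv: "sg (Mv a b c mu nu x) = Mv a (a - b) (- c) (- mu) (- nu) x"
  by (cases x) (simp add: algebra_simps)
lemma sg_dv: "sg (dv e d2) = dv (- e) (- d2)"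
  by (simp add: dv_def)

lemma Mv_add: "Mv a b c mu nu (x + y) = Mv a b c mu nu x + Mv a b c mu nu y"
  by (cases x, cases y) (simp add: algebra_simps)

lemma reid_Phi:
  "(((z,E),(z',E')) \<in> reid_rel HG (Phi a b c mu nu e d2)) \<longleftrightarrow>
    E = E' \<and> (if E' then PR a (a - b) (- c) (- mu) (- nu) (- e) (- d2) z z' else PR a b c mu nu e d2 z z')"
proof -
  let ?M = "Mv a b c mu nu" and ?d = "dv e d2"
  have comp: "hm (hm (x,X) (z',E')) (hinv (Phi a b c mu nu e d2 (x,X))) =
    (if X then (if E' then x + sg z' - sg (?M x) - sg ?d else x + sg z' - ?M x - ?d)
          else (if E' then x + z' - sg (?M x) else x + z' - ?M x), E')" for x X
    by (cases X; cases E') (auto simp: hm_def hinv_def Phi_def sg_add sg_uminus sg_diff sg_sg algebra_simps)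
  have "(((z,E),(z',E')) \<in> reid_rel HG (Phi a b c mu nu e d2)) \<longleftrightarrow>
     (\<exists>x X. (z,E) = hm (hm (x,X) (z',E')) (hinv (Phi a b c mu nu e d2 (x,X))))"
    unfolding reid_rel_def by auto
  also have "\<dots> \<longleftrightarrow> E = E' \<and> (if E' then (\<exists>x. z = x + z' - sg (?M x)) \<or> (\<exists>x. z = x + sg z' - sg (?M x) - sg ?d)
                            else (\<exists>x. z = x + z' - ?M x) \<or> (\<exists>x. z = x + sg z' - ?M x - ?d))"
    unfolding comp by (cases E'; simp add: ex_bool_eq del: split_paired_Ex; blast)
  also have "\<dots> \<longleftrightarrow> E = E' \<and> (if E' then PR a (a - b) (- c) (- mu) (- nu) (- e) (- d2) z z' else PR a b c mu nu e d2 z z')"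
    unfolding PR_def sg_Mv sg_dv by (simp add: algebra_simps del: split_paired_Ex)
  finally show ?thesis .
qed


lemma PR_refl: "PR a b c mu nu e d2 z z"
  unfolding PR_def by (rule disjI1, rule exI[of _ 0]) (simp add: zero_prod_def)

lemma R_fin:
  fixes b c mu n e d2 :: int
  assumes D0: "- 4 * n * (1 + b) + 2 * c * mu \<noteq> 0" and D1: "- 4 * b * (n + 1) + 2 * c * mu \<noteq> 0"
  shows "reidemeister_number HG (Phi (-1) b c mu (2 * n + 1) e d2) =
    enat (nat \<bar>- 4 * n * (1 + b) + 2 * c * mu\<bar> + nat \<bar>- 4 * b * (n + 1) + 2 * c * mu\<bar> + (if even d2 then 4 else 0))"
proof -
  let ?f = "(if even d2 then 4 else 0) :: nat"
  obtain \<omega>0 :: "int\<times>int\<times>int \<Rightarrow> (int\<times>int\<times>int) set" where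
    o0: "\<And>z z'. PR (-1) b c mu (2 * n + 1) e d2 z z' \<longleftrightarrow> \<omega>0 z = \<omega>0 z'" and f0: "finite (range \<omega>0)"
    and c0: "2 * card (range \<omega>0) = 2 * nat \<bar>- 4 * n * (1 + b) + 2 * c * mu\<bar> + ?f"
    using part_fin[where b=b and c=c and mu=mu and n=n and e=e and dq=d2, OF refl D0] by blast
  have D1': "- 4 * (- n - 1) * (1 + (- 1 - b)) + 2 * (- c) * (- mu) = - 4 * b * (n + 1) + 2 * c * mu"
    by (simp add: algebra_simps)
  obtain \<omega>1 :: "int\<times>int\<times>int \<Rightarrow> (int\<times>int\<times>int) set" where
    o1: "\<And>z z'. PR (-1) (- 1 - b) (- c) (- mu) (2 * (- n - 1) + 1) (- e) (- d2) z z' \<longleftrightarrow> \<omega>1 z = \<omega>1 z'" and f1: "finite (range \<omega>1)"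
    and c1: "2 * card (range \<omega>1) = 2 * nat \<bar>- 4 * b * (n + 1) + 2 * c * mu\<bar> + ?f"
    using part_fin[where b="- 1 - b" and c="- c" and mu="- mu" and n="- n - 1" and e="- e" and dq="- d2", OF D1'[symmetric] D1] by auto
  have nn: "- (2 * n + 1) = 2 * (- n - 1) + 1" by simp
  define \<omega> where "\<omega> = (\<lambda>g::el. (snd g, if snd g then \<omega>1 (fst g) else \<omega>0 (fst g)))"
  have rel: "(g, g') \<in> reid_rel HG (Phi (-1) b c mu (2 * n + 1) e d2) \<longleftrightarrow> \<omega> g = \<omega> g'" for g g'
  proof -
    obtain z E where g: "g = (z,E)" by (cases g)
    obtain z' E' where g': "g' = (z',E')" by (cases g')
    show ?thesis unfolding g g' reid_Phi \<omega>_def nn o0 o1 by auto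
  qed
  have rng: "range \<omega> = Pair False ` range \<omega>0 \<union> Pair True ` range \<omega>1"
  proof (intro equalityI subsetI)
    fix y assume "y \<in> range \<omega>"
    then obtain z E where "y = \<omega> (z,E)" by auto
    thus "y \<in> Pair False ` range \<omega>0 \<union> Pair True ` range \<omega>1" unfolding \<omega>_def by (cases E) auto
  next
    fix y assume "y \<in> Pair False ` range \<omega>0 \<union> Pair True ` range \<omega>1"
    then obtain z E where "y = \<omega> (z,E)" unfolding \<omega>_def by (auto; metis fst_conv snd_conv)
    thus "y \<in> range \<omega>" by blast
  qed
  have finr: "finite (range \<omega>)" unfolding rng using f0 f1 by simp
  have cardr: "card (range \<omega>) = card (range \<omega>0) + card (range \<omega>1)"
    unfolding rng by (subst card_Un_disjoint) (auto simp: f0 f1 card_image inj_on_def)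
  have q: "card (UNIV // reid_rel HG (Phi (-1) b c mu (2 * n + 1) e d2)) = card (range \<omega>) \<and>
      (finite (UNIV // reid_rel HG (Phi (-1) b c mu (2 * n + 1) e d2)) \<longleftrightarrow> finite (range \<omega>))"
    by (rule quot_card_inv) (auto simp: rel)
  have "card (range \<omega>) = nat \<bar>- 4 * n * (1 + b) + 2 * c * mu\<bar> + nat \<bar>- 4 * b * (n + 1) + 2 * c * mu\<bar> + ?f"
    using cardr c0 c1 by simp
  thus ?thesis unfolding reidemeister_number_def using q finr by simp
qed

lemma R_inf_gen:
  fixes \<phi> :: "el \<Rightarrow> el" and \<omega> :: "int\<times>int\<times>int \<Rightarrow> 'x"
  assumes rel: "\<And>z z' E E'. ((z,E),(z',E')) \<in> reid_rel HG \<phi> \<Longrightarrow> E = E' \<and> (E = EE \<longrightarrow> P z z')"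
    and refl: "\<And>g. (g,g) \<in> reid_rel HG \<phi>"
    and inv: "\<And>z z'. P z z' \<Longrightarrow> \<omega> z = \<omega> z'" and inf: "infinite (range \<omega>)"
  shows "reidemeister_number HG \<phi> = \<infinity>"
proof -
  define \<Omega> where "\<Omega> = (\<lambda>g::el. if snd g = EE then Some (\<omega> (fst g)) else None)"
  have "infinite (\<Omega> ` UNIV)"
  proof
    assume "finite (\<Omega> ` UNIV)"
    moreover have "Some ` range \<omega> \<subseteq> \<Omega> ` UNIV"
    proof
      fix y assume "y \<in> Some ` range \<omega>"
      then obtain z where "y = Some (\<omega> z)" by auto
      hence "y = \<Omega> (z, EE)" unfolding \<Omega>_def by simp
      thus "y \<in> \<Omega> ` UNIV" by blast
    qed
    ultimately have "finite (Some ` range \<omega>)" using finite_subset by blast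
    thus False using inf finite_imageD inj_Some inj_on_subset by blast
  qed
  moreover have "\<Omega> g = \<Omega> g'" if "(g,g') \<in> reid_rel HG \<phi>" for g g'
  proof -
    obtain z E where g: "g = (z,E)" by (cases g)
    obtain z' E' where g': "g' = (z',E')" by (cases g')
    show ?thesis using rel[of z E z' E'] that inv unfolding g g' \<Omega>_def by auto
  qed
  ultimately have "infinite (UNIV // reid_rel HG \<phi>)"
    by (intro quot_infinite_inv[where \<omega>=\<Omega>]) (auto intro: refl)
  thus ?thesis unfolding reidemeister_number_def by simp
qed

lemma refl_Phi: "(g,g) \<in> reid_rel HG (Phi a b c mu nu e d2)"
  by (cases g) (auto simp: reid_Phi PR_refl)

lemma R_inf1: "reidemeister_number HG (Phi 1 b c mu nu e d2) = \<infinity>"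
  by (rule R_inf_gen[where EE=False and P="PR 1 b c mu nu e d2" and \<omega>=om1])
     (auto simp: reid_Phi refl_Phi part_inf1 om1_unb)

lemma R_inf2:
  assumes "- 4 * n * (1 + b) + 2 * c * mu = 0"
  shows "reidemeister_number HG (Phi (-1) b c mu (2 * n + 1) e d2) = \<infinity>"
proof -
  obtain \<omega> :: "int\<times>int\<times>int \<Rightarrow> int" where o: "\<forall>z z'. PR (-1) b c mu (2 * n + 1) e d2 z z' \<longrightarrow> \<omega> z = \<omega> z'"
    and i: "infinite (range \<omega>)" using part_inf2[OF assms] by blast
  show ?thesis
    by (rule R_inf_gen[where EE=False and P="PR (-1) b c mu (2 * n + 1) e d2" and \<omega>=\<omega>])
       (use o i in \<open>auto simp: reid_Phi refl_Phi\<close>)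
qed

lemma R_inf3:
  assumes "- 4 * b * (n + 1) + 2 * c * mu = 0"
  shows "reidemeister_number HG (Phi (-1) b c mu (2 * n + 1) e d2) = \<infinity>"
proof -
  have D1': "- 4 * (- n - 1) * (1 + (- 1 - b)) + 2 * (- c) * (- mu) = 0"
    using assms by (simp add: algebra_simps)
  obtain \<omega> :: "int\<times>int\<times>int \<Rightarrow> int" where o: "\<forall>z z'. PR (-1) (- 1 - b) (- c) (- mu) (2 * (- n - 1) + 1) (- e) (- d2) z z' \<longrightarrow> \<omega> z = \<omega> z'"
    and i: "infinite (range \<omega>)" using part_inf2[OF D1'] by blast
  have nn: "- (2 * n + 1) = 2 * (- n - 1) + 1" by simp
  show ?thesis
    apply (rule R_inf_gen[where EE=True and P="PR (-1) (- 1 - b) (- c) (- mu) (2 * (- n - 1) + 1) (- e) (- d2)" and \<omega>=\<omega>])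
    subgoal for z z' E E' unfolding reid_Phi nn by auto
    using o i by (auto simp: refl_Phi)
qed


lemma add_int:
  fixes g :: "int \<Rightarrow> int"
  assumes add: "\<And>x y. g (x + y) = g x + g y"
  shows "g k = k * g 1"
proof -
  have g0: "g 0 = 0" using add[of 0 0] by simp
  show ?thesis
  proof (induction k rule: int_induct[where k=0])
    case base show ?case using g0 by simp
  next
    case (step1 i) thus ?case using add[of i 1] by (simp add: algebra_simps)
  next
    case (step2 i)
    have "g i = g (i - 1) + g 1" using add[of "i - 1" 1] by simp
    thus ?case using step2 by (simp add: algebra_simps)
  qed
qed

definition Pc :: "el \<Rightarrow> bool" where
  "Pc g \<longleftrightarrow> (\<forall>h. hm g (hm (hm h g) (hinv h)) = hm (hm (hm h g) (hinv h)) g)"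

lemma Pc_iff: "Pc g \<longleftrightarrow> \<not> snd g"
proof
  assume P: "Pc g"
  show "\<not> snd g"
  proof
    assume s: "snd g"
    obtain u w t where g: "g = ((u,w,t), True)" using s by (cases g) auto
    have "hm g (hm (hm ((1,0,0),False) g) (hinv ((1,0,0),False))) \<noteq> hm (hm (hm ((1,0,0),False) g) (hinv ((1,0,0),False))) g"
      unfolding g by (simp add: hm_def hinv_def)
    thus False using P unfolding Pc_def by blast
  qed
next
  assume "\<not> snd g"
  then obtain z where g: "g = (z, False)" by (cases g) auto
  show "Pc g" unfolding Pc_def
  proof
    fix h :: el
    obtain x X where h: "h = (x, X)" by (cases h)
    show "hm g (hm (hm h g) (hinv h)) = hm (hm (hm h g) (hinv h)) g"
      unfolding g h by (cases X) (auto simp: hm_def hinv_def algebra_simps)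
  qed
qed

lemma classify:
  assumes phi: "\<phi> \<in> iso HG HG"
  shows "\<exists>a b c mu nu e d2. \<phi> = Phi a b c mu nu e d2 \<and> (a = 1 \<or> a = -1) \<and>
     ((a - 2 * b) * nu + 2 * c * mu = 1 \<or> (a - 2 * b) * nu + 2 * c * mu = -1)"
proof -
  have hom: "\<phi> (hm x y) = hm (\<phi> x) (\<phi> y)" for x y
  proof -
    have "\<phi> \<in> hom HG HG" using phi unfolding iso_def by auto
    hence "\<phi> (x \<otimes>\<^bsub>HG\<^esub> y) = \<phi> x \<otimes>\<^bsub>HG\<^esub> \<phi> y" unfolding hom_def by (simp del: split_paired_All)
    thus ?thesis by simp
  qed
  have bij: "bij \<phi>" using phi unfolding iso_def by auto
  interpret gh: group_hom HG HG \<phi>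
    using phi group_HG unfolding iso_def group_hom_def group_hom_axioms_def by auto
  have phinv: "\<phi> (hinv x) = hinv (\<phi> x)" for x using gh.hom_inv[of x] by simp
  have phone: "\<phi> (0, False) = (0, False)" using gh.hom_one by simp
  have inj: "\<phi> x = \<phi> y \<Longrightarrow> x = y" for x y using bij by (simp add: bij_def inj_eq)
  have surj: "\<exists>x. \<phi> x = y" for y using bij by (metis bij_def surjD)
  have Pphi: "Pc (\<phi> g) \<longleftrightarrow> Pc g" for g
  proof -
    have "Pc (\<phi> g) \<longleftrightarrow> (\<forall>h. hm (\<phi> g) (hm (hm (\<phi> h) (\<phi> g)) (hinv (\<phi> h))) = hm (hm (hm (\<phi> h) (\<phi> g)) (hinv (\<phi> h))) (\<phi> g))"
      unfolding Pc_def by (metis surj)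
    also have "\<dots> \<longleftrightarrow> (\<forall>h. \<phi> (hm g (hm (hm h g) (hinv h))) = \<phi> (hm (hm (hm h g) (hinv h)) g))"
      by (simp add: hom phinv)
    also have "\<dots> \<longleftrightarrow> Pc g" unfolding Pc_def using inj by metis
    finally show ?thesis .
  qed
  have snd_phi: "snd (\<phi> g) = snd g" for g using Pphi[of g] Pc_iff by auto
  define f where "f = (\<lambda>z. fst (\<phi> (z, False)))"
  have phiF: "\<phi> (z, False) = (f z, False)" for z using snd_phi[of "(z,False)"] unfolding f_def
    by (metis prod.collapse snd_conv)
  have fadd: "f (z + z') = f z + f z'" for z z'
  proof -
    have "\<phi> (hm (z,False) (z',False)) = hm (\<phi> (z,False)) (\<phi> (z',False))" by (rule hom)
    thus ?thesis by (simp add: hm_def phiF)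
  qed
  have f0: "f 0 = 0" using fadd[of 0 0] by simp
  define d where "d = fst (\<phi> (0, True))"
  have phiT0: "\<phi> (0, True) = (d, True)" using snd_phi[of "(0,True)"] unfolding d_def
    by (metis prod.collapse snd_conv)
  have phiT: "\<phi> (z, True) = (f z + d, True)" for z
  proof -
    have "(z, True) = hm (z,False) (0,True)" by (simp add: hm_def)
    hence "\<phi> (z, True) = hm (f z, False) (d, True)" using hom phiF phiT0 by metis
    thus ?thesis by (simp add: hm_def)
  qed
  have fsg0: "f (sg z) = d + sg (f z) + sg d" for z
  proof -
    have "(sg z, False) = hm (hm (0,True) (z,False)) (0,True)" by (simp add: hm_def sg_zero)
    hence "\<phi> (sg z, False) = hm (hm (d,True) (f z,False)) (d,True)" using hom phiF phiT0 by metis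
    thus ?thesis by (simp add: hm_def phiF)
  qed
  have dsd: "d + sg d = 0" using fsg0[of 0] f0 by (simp add: sg_zero)
  have fsg: "f (sg z) = sg (f z)" for z using fsg0[of z] dsd by (simp add: algebra_simps)
    define F1 where "F1 = f (1,0,0)"
  define F2 where "F2 = f (0,1,0)"
  define F3 where "F3 = f (0,0,1)"
  have lin1: "f (k,0,0) = (k * fst F1, k * fst (snd F1), k * snd (snd F1))" for k
  proof -
    have A: "f (x + y, 0, 0) = f (x,0,0) + f (y,0,0)" for x y using fadd[of "(x,0,0)" "(y,0,0)"] by simp
    have "fst (f (k,0,0)) = k * fst (f (1,0,0))"
      by (rule add_int[where g="\<lambda>k. fst (f (k,0,0))"]) (simp add: A)
    moreover have "fst (snd (f (k,0,0))) = k * fst (snd (f (1,0,0)))"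
      by (rule add_int[where g="\<lambda>k. fst (snd (f (k,0,0)))"]) (simp add: A)
    moreover have "snd (snd (f (k,0,0))) = k * snd (snd (f (1,0,0)))"
      by (rule add_int[where g="\<lambda>k. snd (snd (f (k,0,0)))"]) (simp add: A)
    ultimately show ?thesis unfolding F1_def by (metis prod.collapse)
  qed
  have lin2: "f (0,k,0) = (k * fst F2, k * fst (snd F2), k * snd (snd F2))" for k
  proof -
    have A: "f (0, x + y, 0) = f (0,x,0) + f (0,y,0)" for x y using fadd[of "(0,x,0)" "(0,y,0)"] by simp
    have "fst (f (0,k,0)) = k * fst (f (0,1,0))"
      by (rule add_int[where g="\<lambda>k. fst (f (0,k,0))"]) (simp add: A)
    moreover have "fst (snd (f (0,k,0))) = k * fst (snd (f (0,1,0)))"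
      by (rule add_int[where g="\<lambda>k. fst (snd (f (0,k,0)))"]) (simp add: A)
    moreover have "snd (snd (f (0,k,0))) = k * snd (snd (f (0,1,0)))"
      by (rule add_int[where g="\<lambda>k. snd (snd (f (0,k,0)))"]) (simp add: A)
    ultimately show ?thesis unfolding F2_def by (metis prod.collapse)
  qed
  have lin3: "f (0,0,k) = (k * fst F3, k * fst (snd F3), k * snd (snd F3))" for k
  proof -
    have A: "f (0, 0, x + y) = f (0,0,x) + f (0,0,y)" for x y using fadd[of "(0,0,x)" "(0,0,y)"] by simp
    have "fst (f (0,0,k)) = k * fst (f (0,0,1))"
      by (rule add_int[where g="\<lambda>k. fst (f (0,0,k))"]) (simp add: A)
    moreover have "fst (snd (f (0,0,k))) = k * fst (snd (f (0,0,1)))"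
      by (rule add_int[where g="\<lambda>k. fst (snd (f (0,0,k)))"]) (simp add: A)
    moreover have "snd (snd (f (0,0,k))) = k * snd (snd (f (0,0,1)))"
      by (rule add_int[where g="\<lambda>k. snd (snd (f (0,0,k)))"]) (simp add: A)
    ultimately show ?thesis unfolding F3_def by (metis prod.collapse)
  qed
  obtain m11 m21 m31 where F1: "F1 = (m11, m21, m31)" by (cases F1)
  obtain m12 m22 m32 where F2: "F2 = (m12, m22, m32)" by (cases F2)
  obtain m13 m23 m33 where F3: "F3 = (m13, m23, m33)" by (cases F3)
  have flin: "f (u,w,t) = (m11 * u + m12 * w + m13 * t, m21 * u + m22 * w + m23 * t, m31 * u + m32 * w + m33 * t)" for u w t
  proof -
    have "f (u,w,t) = f (u,0,0) + f (0,w,0) + f (0,0,t)" using fadd[of "(u,0,0)" "(0,w,0)"] fadd[of "(u,w,0)" "(0,0,t)"] by simp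
    thus ?thesis unfolding lin1 lin2 lin3 F1 F2 F3 by (simp add: algebra_simps)
  qed
  have c1: "m13 = 0 \<and> m23 = 0 \<and> m33 = m11 + 2 * m31"
    using fsg[of "(1,0,0)"] by (simp add: flin)
  have c2: "m12 = - 2 * m32"
    using fsg[of "(0,1,0)"] by (simp add: flin)
  obtain d1 d2 d3 where dd: "d = (d1, d2, d3)" by (cases d)
  have d1: "d1 = - 2 * d3" using dsd unfolding dd by (simp add: zero_prod_def)
  define a where "a = m33"
  define b where "b = m31"
  define c where "c = m32"
  have fM: "f z = Mv a b c m21 m22 z" for z
    by (cases z) (simp add: flin a_def b_def c_def c1 c2 algebra_simps)
  have dD: "d = dv d3 d2" unfolding dd dv_def d1 by simp
  have phiEq: "\<phi> = Phi a b c m21 m22 d3 d2"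
  proof
    fix g :: el
    obtain z E where g: "g = (z,E)" by (cases g)
    show "\<phi> g = Phi a b c m21 m22 d3 d2 g"
      unfolding g Phi_def by (cases E) (simp_all add: phiF phiT fM dD)
  qed
    have fsurj: "\<exists>z. f z = y" for y
  proof -
    obtain g where "\<phi> g = (y, False)" using surj by blast
    moreover obtain z E where "g = (z, E)" by (cases g)
    ultimately have "\<phi> (z, False) = (y, False)" using snd_phi[of g] by auto
    hence "f z = y" using phiF by simp
    thus ?thesis by blast
  qed
  obtain u1 w1 t1 where z1: "f (u1,w1,t1) = (1,0,0)" using fsurj by (metis prod_cases3)
  obtain u2 w2 t2 where z2: "f (u2,w2,t2) = (0,1,0)" using fsurj by (metis prod_cases3)
  obtain u3 w3 t3 where z3: "f (u3,w3,t3) = (0,0,1)" using fsurj by (metis prod_cases3)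
  define q where "q = (a - 2 * b) * m22 + 2 * c * m21"
  have e1: "(a - 2 * b) * u1 - 2 * c * w1 = 1" "m21 * u1 + m22 * w1 = 0" using z1 unfolding fM by auto
  have e2: "(a - 2 * b) * u2 - 2 * c * w2 = 0" "m21 * u2 + m22 * w2 = 1" using z2 unfolding fM by auto
  have e3: "(a - 2 * b) * u3 - 2 * c * w3 = 0" "m21 * u3 + m22 * w3 = 0" "b * u3 + c * w3 + a * t3 = 1"
    using z3 unfolding fM by auto
  have "q * (u1 * w2 - u2 * w1) = ((a - 2 * b) * u1 - 2 * c * w1) * (m21 * u2 + m22 * w2) - ((a - 2 * b) * u2 - 2 * c * w2) * (m21 * u1 + m22 * w1)"
    unfolding q_def by (simp add: algebra_simps)
  hence "q * (u1 * w2 - u2 * w1) = 1" using e1 e2 by simp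
  hence q1: "q = 1 \<or> q = -1" using zmult_eq_1_iff by blast
  have "q * u3 = m22 * ((a - 2 * b) * u3 - 2 * c * w3) + 2 * c * (m21 * u3 + m22 * w3)"
    unfolding q_def by (simp add: algebra_simps)
  hence u30: "u3 = 0" using e3 q1 by auto
  have "q * w3 = (a - 2 * b) * (m21 * u3 + m22 * w3) - m21 * ((a - 2 * b) * u3 - 2 * c * w3)"
    unfolding q_def by (simp add: algebra_simps)
  hence w30: "w3 = 0" using e3 q1 by auto
  have "a * t3 = 1" using e3 u30 w30 by simp
  hence a1: "a = 1 \<or> a = -1" using zmult_eq_1_iff by blast
  show ?thesis using phiEq a1 q1 unfolding q_def by blast
qed


lemma Mv_sg: "Mv a b c mu nu (sg z) = sg (Mv a b c mu nu z)"
  by (cases z) (simp add: algebra_simps)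

lemma Phi_hom: "Phi a b c mu nu e d2 \<in> hom HG HG"
proof -
  have "Phi a b c mu nu e d2 (hm x y) = hm (Phi a b c mu nu e d2 x) (Phi a b c mu nu e d2 y)" for x y
  proof -
    obtain z E where x: "x = (z,E)" by (cases x)
    obtain z' E' where y: "y = (z',E')" by (cases y)
    have sd: "dv e d2 + sg (dv e d2) = 0" by (simp add: dv_def zero_prod_def)
    show ?thesis unfolding x y
      by (cases E; cases E') (auto simp: hm_def Phi_def Mv_add Mv_sg sg_add sg_zero algebra_simps sd[unfolded add.commute[of "dv e d2"]] sd)
  qed
  thus ?thesis unfolding hom_def by auto
qed

lemma id_Phi: "Phi 1 0 0 0 1 0 0 = (\<lambda>x. x)"
proof
  fix g :: el
  obtain u w t E where g: "g = ((u,w,t),E)" by (metis prod.collapse)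
  show "Phi 1 0 0 0 1 0 0 g = g" unfolding g Phi_def by (simp add: dv_def zero_prod_def)
qed

definition Psik :: "int \<Rightarrow> el \<Rightarrow> el" where
  "Psik k = (\<lambda>((u',w',t'),E). (let y2 = w' - (if E then 1 else 0); u = - u' + 2 * k * y2; w = u' + (1 - 2 * k) * y2
      in (u, w, - t' - k * u - k * w), E))"

lemma Phik_iso:
  "Phi (-1) (- k) (- k) 1 (2 * 0 + 1) 0 1 \<in> iso HG HG"
proof -
  let ?P = "Phi (-1) (- k) (- k) 1 (2 * 0 + 1) 0 1"
  have l: "Psik k (?P g) = g" for g
  proof -
    obtain u w t E where g: "g = ((u,w,t),E)" by (metis prod.collapse)
    show ?thesis unfolding g by (cases E) (simp_all add: Phi_def Psik_def dv_def Let_def algebra_simps)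
  qed
  have r: "?P (Psik k g) = g" for g
  proof -
    obtain u w t E where g: "g = ((u,w,t),E)" by (metis prod.collapse)
    show ?thesis unfolding g by (cases E) (simp_all add: Phi_def Psik_def dv_def Let_def algebra_simps)
  qed
  have "bij ?P" using l r by (intro o_bij[where g="Psik k"]) auto
  thus ?thesis using Phi_hom unfolding iso_def by (simp add: bij_betw_def)
qed

theorem spec_HG: "reidemeister_spectrum HG = {enat n | n. n > 0 \<and> 4 dvd n} \<union> {\<infinity>}"
proof (intro equalityI subsetI)
  fix x assume "x \<in> reidemeister_spectrum HG"
  then obtain \<phi> where phi: "\<phi> \<in> iso HG HG" and x: "x = reidemeister_number HG \<phi>"
    unfolding reidemeister_spectrum_def by auto
  obtain a b c mu nu e d2 where P: "\<phi> = Phi a b c mu nu e d2" and a: "a = 1 \<or> a = -1"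
    and q: "(a - 2 * b) * nu + 2 * c * mu = 1 \<or> (a - 2 * b) * nu + 2 * c * mu = -1"
    using classify[OF phi] by blast
  show "x \<in> {enat n | n. n > 0 \<and> 4 dvd n} \<union> {\<infinity>}"
  proof (cases "a = 1")
    case True
    thus ?thesis unfolding x P using R_inf1 by simp
  next
    case False
    hence a1: "a = -1" using a by simp
    have "odd nu"
    proof
      assume "even nu"
      then obtain r where "nu = 2 * r" by (auto elim: evenE)
      hence "(a - 2 * b) * nu + 2 * c * mu = 2 * ((a - 2 * b) * r + c * mu)" by (simp add: algebra_simps)
      thus False using q by presburger
    qed
    then obtain n where nu: "nu = 2 * n + 1" by (auto elim: oddE)
    define D0 where "D0 = - 4 * n * (1 + b) + 2 * c * mu"
    define D1 where "D1 = - 4 * b * (n + 1) + 2 * c * mu"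
    show ?thesis
    proof (cases "D0 = 0 \<or> D1 = 0")
      case True
      thus ?thesis unfolding x P a1 nu D0_def D1_def using R_inf2 R_inf3 by auto
    next
      case False
      define f :: nat where "f = (if even d2 then 4 else 0)"
      have R: "x = enat (nat \<bar>D0\<bar> + nat \<bar>D1\<bar> + f)"
        unfolding x P a1 nu D0_def D1_def f_def using R_fin False unfolding D0_def D1_def by auto
      define qq where "qq = (a - 2 * b) * nu + 2 * c * mu"
      have qq: "qq = 1 \<or> qq = -1" using q unfolding qq_def by simp
      have e0: "D0 = qq + 1 - 2 * (n - b)" unfolding D0_def qq_def a1 nu by (simp add: algebra_simps)
      have e1: "D1 = qq + 1 + 2 * (n - b)" unfolding D1_def qq_def a1 nu by (simp add: algebra_simps)
      have fv: "int f = 0 \<or> int f = 4" unfolding f_def by simp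
      have "4 dvd (\<bar>D0\<bar> + \<bar>D1\<bar> + int f)" using qq fv unfolding e0 e1 by presburger
      moreover have "int (nat \<bar>D0\<bar> + nat \<bar>D1\<bar> + f) = \<bar>D0\<bar> + \<bar>D1\<bar> + int f" by simp
      ultimately have "(4::int) dvd int (nat \<bar>D0\<bar> + nat \<bar>D1\<bar> + f)" by simp
      hence dv4: "4 dvd (nat \<bar>D0\<bar> + nat \<bar>D1\<bar> + f)" by presburger
      have pos: "nat \<bar>D0\<bar> + nat \<bar>D1\<bar> + f > 0" using False by simp
      show ?thesis unfolding R using dv4 pos by blast
    qed
  qed
next
  fix x assume "x \<in> {enat n | n. n > 0 \<and> 4 dvd n} \<union> {\<infinity>}"
  then consider (inf) "x = \<infinity>" | (fin) n where "x = enat n" "n > 0" "4 dvd n" by blast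
  thus "x \<in> reidemeister_spectrum HG"
  proof cases
    case inf
    have "(\<lambda>x. x) \<in> iso HG HG" by (rule iso_set_refl)
    moreover have "reidemeister_number HG (\<lambda>x. x) = \<infinity>" using R_inf1[of 0 0 0 1 0 0] unfolding id_Phi .
    ultimately show ?thesis unfolding reidemeister_spectrum_def inf
      by (intro CollectI exI[of _ "\<lambda>x. x"]) simp
  next
    case fin
    obtain k where k: "n = 4 * k" using fin(3) by blast
    have kpos: "k > 0" using fin(2) k by simp
    let ?P = "Phi (-1) (- int k) (- int k) 1 (2 * 0 + 1) 0 1"
    have D0: "- 4 * 0 * (1 + - int k) + 2 * (- int k) * 1 \<noteq> 0" using kpos by simp
    have D1: "- 4 * (- int k) * (0 + 1) + 2 * (- int k) * 1 \<noteq> 0" using kpos by simp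
    have "reidemeister_number HG ?P = enat (nat \<bar>- 4 * 0 * (1 + - int k) + 2 * (- int k) * 1\<bar> + nat \<bar>- 4 * (- int k) * (0 + 1) + 2 * (- int k) * 1\<bar> + (if even (1::int) then 4 else 0))"
      by (rule R_fin[OF D0 D1])
    also have "\<dots> = enat n" unfolding k by simp
    finally have "reidemeister_number HG ?P = x" using fin(1) by simp
    moreover have "?P \<in> iso HG HG" by (rule Phik_iso)
    ultimately show ?thesis unfolding reidemeister_spectrum_def
      by (intro CollectI exI[of _ ?P]) simp
  qed
qed


lemma Aff3_simps[simp]: "carrier Aff3 = {p. invertible (snd p)}" "mult Aff3 = aff_mult" "one Aff3 = (0, mat 1)"
  by (simp_all add: Aff3_def)

lemma invertible_I3: "invertible (mat 1 :: real^3^3)"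
  unfolding invertible_def by (intro exI[of _ "mat 1"]) simp

lemma group_Aff3: "group Aff3"
proof (rule groupI)
  fix x y assume "x \<in> carrier Aff3" "y \<in> carrier Aff3"
  thus "x \<otimes>\<^bsub>Aff3\<^esub> y \<in> carrier Aff3" by (simp add: aff_mult_def invertible_mult)
next
  show "\<one>\<^bsub>Aff3\<^esub> \<in> carrier Aff3" by (simp add: invertible_I3)
next
  fix x y z assume "x \<in> carrier Aff3" "y \<in> carrier Aff3" "z \<in> carrier Aff3"
  show "x \<otimes>\<^bsub>Aff3\<^esub> y \<otimes>\<^bsub>Aff3\<^esub> z = x \<otimes>\<^bsub>Aff3\<^esub> (y \<otimes>\<^bsub>Aff3\<^esub> z)"
    by (simp add: aff_mult_def matrix_vector_right_distrib matrix_vector_mul_assoc matrix_mul_assoc add.assoc)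
next
  fix x assume "x \<in> carrier Aff3"
  show "\<one>\<^bsub>Aff3\<^esub> \<otimes>\<^bsub>Aff3\<^esub> x = x" by (simp add: aff_mult_def)
next
  fix x assume x: "x \<in> carrier Aff3"
  hence "invertible (snd x)" by simp
  then obtain X' where X': "snd x ** X' = mat 1" "X' ** snd x = mat 1" unfolding invertible_def by blast
  have "invertible X'" unfolding invertible_def using X' by blast
  moreover have "aff_mult (- (X' *v fst x), X') x = (0, mat 1)"
    using X' by (simp add: aff_mult_def matrix_vector_mul_assoc)
  ultimately show "\<exists>y\<in>carrier Aff3. y \<otimes>\<^bsub>Aff3\<^esub> x = \<one>\<^bsub>Aff3\<^esub>" by (intro bexI[of _ "(- (X' *v fst x), X')"]) auto
qed

definition vec3 :: "int\<times>int\<times>int \<Rightarrow> real^3" where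
  "vec3 = (\<lambda>(u,w,t). vector [- real_of_int t, real_of_int u, real_of_int w])"

definition FF :: "el \<Rightarrow> (real^3) \<times> (real^3^3)" where
  "FF g = (vec3 (fst g), if snd g then A_mat else mat 1)"

lemma vec3_nth: "vec3 (u,w,t) $ 1 = - real_of_int t" "vec3 (u,w,t) $ 2 = real_of_int u" "vec3 (u,w,t) $ 3 = real_of_int w"
  by (simp_all add: vec3_def)

lemma vec3_add: "vec3 (x + y) = vec3 x + vec3 y"
  by (cases x, cases y) (simp add: vec_eq_iff forall_3 vec3_nth)

lemma vec3_zero: "vec3 0 = 0"
  by (simp add: vec_eq_iff forall_3 vec3_def zero_prod_def)

lemma A_nth: "A_mat $ 1 $ 1 = 1" "A_mat $ 1 $ 2 = -1" "A_mat $ 1 $ 3 = 0"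
  "A_mat $ 2 $ 1 = 0" "A_mat $ 2 $ 2 = -1" "A_mat $ 2 $ 3 = 0"
  "A_mat $ 3 $ 1 = 0" "A_mat $ 3 $ 2 = 0" "A_mat $ 3 $ 3 = -1"
  by (simp_all add: A_mat_def)

lemma A_vec3: "A_mat *v vec3 z = vec3 (sg z)"
  by (cases z) (simp add: vec_eq_iff forall_3 vec3_nth matrix_vector_mult_def sum_3 A_nth)

lemma AA: "A_mat ** A_mat = mat 1"
  by (simp add: vec_eq_iff forall_3 matrix_matrix_mult_def sum_3 A_nth mat_def)

lemma invertible_A: "invertible A_mat"
  unfolding invertible_def using AA by blast

lemma FF_mult: "FF (hm g h) = aff_mult (FF g) (FF h)"
  by (cases "snd g"; cases "snd h") (simp_all add: FF_def hm_def aff_mult_def vec3_add A_vec3 AA)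

lemma vec3_inj: "vec3 z = vec3 z' \<Longrightarrow> z = z'"
proof -
  obtain u w t where z: "z = (u,w,t)" by (cases z)
  obtain u' w' t' where z': "z' = (u',w',t')" by (cases z')
  assume "vec3 z = vec3 z'"
  hence "vec3 z $ 1 = vec3 z' $ 1" "vec3 z $ 2 = vec3 z' $ 2" "vec3 z $ 3 = vec3 z' $ 3" by simp_all
  thus ?thesis unfolding z z' vec3_nth by simp
qed

lemma A_ne_I: "A_mat \<noteq> mat 1"
proof
  assume "A_mat = mat 1"
  hence "A_mat $ 2 $ 2 = (mat 1 :: real^3^3) $ 2 $ 2" by simp
  thus False by (simp add: A_nth mat_def)
qed

lemma inj_FF: "inj FF"
proof (rule injI)
  fix g h assume "FF g = FF h"
  hence "vec3 (fst g) = vec3 (fst h)" "(if snd g then A_mat else mat 1) = (if snd h then A_mat else mat 1)"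
    unfolding FF_def by simp_all
  hence "fst g = fst h" "snd g = snd h" using vec3_inj A_ne_I by (auto split: if_splits)
  thus "g = h" by (simp add: prod_eq_iff)
qed

lemma FF_carrier: "FF g \<in> carrier Aff3"
  by (simp add: FF_def invertible_A invertible_I3)

lemma FF_one: "FF (0, False) = (0, mat 1)"
  by (simp add: FF_def vec3_zero)

lemma FF_inv: "inv\<^bsub>Aff3\<^esub> (FF g) = FF (hinv g)"
proof (rule group.inv_equality[OF group_Aff3])
  have "hm (hinv g) g = (0, False)" by (cases g) (auto simp: hm_def hinv_def sg_uminus sg_sg)
  thus "FF (hinv g) \<otimes>\<^bsub>Aff3\<^esub> FF g = \<one>\<^bsub>Aff3\<^esub>" using FF_mult[of "hinv g" g] FF_one by simp
qed (rule FF_carrier)+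

lemma gens_sub: "Z3 \<union> {(0, A_mat)} \<subseteq> range FF"
proof
  fix x assume "x \<in> Z3 \<union> {(0, A_mat)}"
  then consider (z) z where "x = ((\<chi> i. of_int (z i)), mat 1)" | (a) "x = (0, A_mat)" unfolding Z3_def by blast
  thus "x \<in> range FF"
  proof cases
    case z
    have "x = FF ((z 2, z 3, - z 1), False)"
      unfolding z FF_def by (simp add: vec_eq_iff forall_3 vec3_nth)
    thus ?thesis by blast
  next
    case a
    have "x = FF (0, True)" unfolding a FF_def by (simp add: vec3_zero)
    thus ?thesis by blast
  qed
qed

lemma carrier_Gamma: "carrier Gamma = range FF"
proof
  show "carrier Gamma \<subseteq> range FF"
  proof
    fix x assume "x \<in> carrier Gamma"
    hence "x \<in> generate Aff3 (Z3 \<union> {(0, A_mat)})" by (simp add: Gamma_def)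
    thus "x \<in> range FF"
    proof (induction rule: generate.induct)
      case one show ?case using FF_one by (metis Aff3_simps(3) rangeI)
    next
      case (incl h) thus ?case using gens_sub by blast
    next
      case (inv h)
      then obtain g where "h = FF g" using gens_sub by blast
      thus ?case using FF_inv by simp
    next
      case (eng h1 h2)
      then obtain g1 g2 where "h1 = FF g1" "h2 = FF g2" by blast
      thus ?case using FF_mult[of g1 g2] by (metis Aff3_simps(2) rangeI)
    qed
  qed
  show "range FF \<subseteq> carrier Gamma"
  proof
    fix x assume "x \<in> range FF"
    then obtain z E where x: "x = FF (z, E)" by auto
    have g1: "FF (z, False) \<in> generate Aff3 (Z3 \<union> {(0, A_mat)})"
    proof (rule generate.incl)
      obtain u w t where zz: "z = (u,w,t)" by (cases z)
      have "FF (z, False) = ((\<chi> i. of_int ((\<lambda>i::3. if i = 1 then - t else if i = 2 then u else w) i)), mat 1)"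
        unfolding FF_def zz by (simp add: vec_eq_iff forall_3 vec3_nth)
      thus "FF (z, False) \<in> Z3 \<union> {(0, A_mat)}" unfolding Z3_def
        by (intro UnI1 CollectI exI[of _ "\<lambda>i::3. if i = 1 then - t else if i = 2 then u else w"]) simp
    qed
    have g2: "FF (0, True) \<in> generate Aff3 (Z3 \<union> {(0, A_mat)})"
      by (rule generate.incl) (simp add: FF_def vec3_zero)
    have "FF (z, True) = FF (z, False) \<otimes>\<^bsub>Aff3\<^esub> FF (0, True)"
      using FF_mult[of "(z,False)" "(0,True)"] by (simp add: hm_def)
    hence "FF (z, True) \<in> generate Aff3 (Z3 \<union> {(0, A_mat)})" using generate.eng[OF g1 g2] by simp
    thus "x \<in> carrier Gamma" unfolding x Gamma_def using g1 by (cases E) simp_all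
  qed
qed

lemma group_Gamma: "group Gamma"
proof -
  have "Z3 \<union> {(0, A_mat)} \<subseteq> carrier Aff3"
  proof
    fix x assume "x \<in> Z3 \<union> {(0, A_mat)}"
    then obtain g where "x = FF g" using gens_sub by blast
    thus "x \<in> carrier Aff3" using FF_carrier by simp
  qed
  hence "subgroup (generate Aff3 (Z3 \<union> {(0, A_mat)})) Aff3"
    by (rule group.generate_is_subgroup[OF group_Aff3])
  thus ?thesis unfolding Gamma_def by (rule subgroup.subgroup_is_group[OF _ group_Aff3])
qed

lemma FF_iso: "FF \<in> iso HG Gamma"
proof (rule isoI)
  show "FF \<in> hom HG Gamma"
    unfolding hom_def using carrier_Gamma FF_mult by (auto simp: Gamma_def)
  show "bij_betw FF (carrier HG) (carrier Gamma)"
    using inj_FF carrier_Gamma by (simp add: bij_betw_def)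
qed

theorem proposition5p13:
  shows "reidemeister_spectrum Gamma = {enat n | n. n > 0 \<and> 4 dvd n} \<union> {\<infinity>}"
  using spec_eq[OF group_Gamma group_HG FF_iso] spec_HG by simp


end
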